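(* Let $V$ be a Gotzmann set of monomials of degree $d$ in $R=K[x_1,\dots,x_n]$. Then for every $i=1,2,\dots,n$, $$\overline{|V|}^{(n-1)}\leq |\mathrm{D}_i(V)| \leq |V|_{\langle\!\langle n-1\rangle\!\rangle}.$$
   Context: Let $K$ be a field and $R=K[x_1,\dots,x_n]$ with $\deg x_i=1$. Let $M=\{x_1,\dots,x_n\}$, $M^d$ the set of monomials of degree $d$ ($M^0=\{1\}$), and for a set $V$ of monomials of degree $d$ let $MV=\{x_iv : v\in V,\ 1\le i\le n\}$. Binomial representations: for positive integers $k,h$, write uniquely $h=\binom{h(k)+k}{k}+\binom{h(k-1)+k-1}{k-1}+\dots+\binom{h(j)+j}{j}$ with $h(k)\ge h(k-1)\ge\dots\ge h(j)\ge 0$, $j\ge1$ (the $k$th binomial representation). Define $h^{\langle k\rangle}=\sum_{m=j}^{k}\binom{h(m)+m+1}{m}$ and $h_{\langle\!\langle k\rangle\!\rangle}=\sum_{m=j}^{k}\binom{h(m)+m-1}{m-1}$, with $0^{\langle k\rangle}=0_{\langle\!\langle k\rangle\!\rangle}=0$ and $1^{\langle 0\rangle}=1_{\langle\!\langle 0\rangle\!\rangle}=1$. By Macaulay, $|MV|\ge |V|^{\langle n-1\rangle}$ for any set $V$ of monomials of the same degree; $V$ is called a Gotzmann set if $|MV|=|V|^{\langle n-1\rangle}$. For a positive integer $h$, let $\alpha=\max\{0,\max\{\alpha\in\mathbb{Z} : h-\binom{\alpha+k}{k}>0\}\}$ and set $\overline{h}^{(k)}=h-\binom{\alpha+k}{k}$;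 thus $\overline{h}^{(k)}=0$ if $h=1$, $\overline{h}^{(k)}=\binom{h(k)+k-1}{k-1}$ if $h>1$ and $j=k$, and $\overline{h}^{(k)}=\sum_{m=j}^{k-1}\binom{h(m)+m}{m}$ if $h>1$ and $j<k$. (For $h=0$ it is taken to be $0$.) For a set $V$ of monomials of degree $d$ with $u=\gcd(V)$: if $|V|>1$, let $\mathrm{K}_i(V)=\{v\in M^d : x_iu \text{ divides } v\}$ and $\mathrm{D}_i(V)=V\setminus \mathrm{K}_i(V)$; if $|V|=1$, let $\mathrm{K}_i(V)=V$ and $\mathrm{D}_i(V)=\emptyset$. *)

theory Defs
  imports Main
begin

text \<open>Monomials in x_1..x_n are exponent vectors a :: nat => nat with support in {1..n}.\<close>

definition monomials :: "nat \<Rightarrow> nat \<Rightarrow> (nat \<Rightarrow> nat) set" where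
  "monomials n d = {a. (\<forall>k. a k \<noteq> 0 \<longrightarrow> k \<in> {1..n}) \<and> (\<Sum>k\<in>{1..n}. a k) = d}"

definition xmul :: "nat \<Rightarrow> (nat \<Rightarrow> nat) \<Rightarrow> (nat \<Rightarrow> nat)" where
  "xmul i a = a(i := Suc (a i))"

definition MV :: "nat \<Rightarrow> (nat \<Rightarrow> nat) set \<Rightarrow> (nat \<Rightarrow> nat) set" where
  "MV n V = {xmul i v | i v. i \<in> {1..n} \<and> v \<in> V}"

definition mdvd :: "(nat \<Rightarrow> nat) \<Rightarrow> (nat \<Rightarrow> nat) \<Rightarrow> bool" where
  "mdvd u v \<longleftrightarrow> (\<forall>k. u k \<le> v k)"

definition mgcd :: "(nat \<Rightarrow> nat) set \<Rightarrow> (nat \<Rightarrow> nat)" where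
  "mgcd V = (\<lambda>k. Min ((\<lambda>v. v k) ` V))"

definition binrep :: "nat \<Rightarrow> nat \<Rightarrow> nat \<Rightarrow> (nat \<Rightarrow> nat) \<Rightarrow> bool" where
  "binrep k h j f \<longleftrightarrow> 1 \<le> j \<and> j \<le> k \<and> (\<forall>m. j \<le> m \<and> m < k \<longrightarrow> f m \<le> f (Suc m))
     \<and> h = (\<Sum>m=j..k. (f m + m) choose m)"

definition mac_up :: "nat \<Rightarrow> nat \<Rightarrow> nat" where
  "mac_up k h = (if h = 0 then 0
     else if k = 0 then (if h = 1 then 1 else undefined)
     else (let (j, f) = (SOME (j, f). binrep k h j f) in
           \<Sum>m=j..k. (f m + m + 1) choose m))"

definition mac_low :: "nat \<Rightarrow> nat \<Rightarrow> nat" where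
  "mac_low k h = (if h = 0 then 0
     else if k = 0 then (if h = 1 then 1 else undefined)
     else (let (j, f) = (SOME (j, f). binrep k h j f) in
           \<Sum>m=j..k. (f m + m - 1) choose (m - 1)))"

definition bar_alpha :: "nat \<Rightarrow> nat \<Rightarrow> nat" where
  "bar_alpha k h = (if h \<le> 1 then 0 else Max {a. ((a + k) choose k) < h})"

definition hbar :: "nat \<Rightarrow> nat \<Rightarrow> nat" where
  "hbar k h = (if h = 0 then 0 else h - ((bar_alpha k h + k) choose k))"

definition gotzmann :: "nat \<Rightarrow> (nat \<Rightarrow> nat) set \<Rightarrow> bool" where
  "gotzmann n V \<longleftrightarrow> card (MV n V) = mac_up (n - 1) (card V)"

definition Kset :: "nat \<Rightarrow> nat \<Rightarrow> nat \<Rightarrow> (nat \<Rightarrow> nat) set \<Rightarrow> (nat \<Rightarrow> nat) set" where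
  "Kset n d i V = (if card V > 1 then {v \<in> monomials n d. mdvd (xmul i (mgcd V)) v} else V)"

definition Dset :: "nat \<Rightarrow> nat \<Rightarrow> nat \<Rightarrow> (nat \<Rightarrow> nat) set \<Rightarrow> (nat \<Rightarrow> nat) set" where
  "Dset n d i V = (if card V > 1 then V - Kset n d i V else {})"

end

theory Submission
  imports Defs
begin

declare binomial_Suc_Suc[simp del]

definition btop :: "nat \<Rightarrow> nat \<Rightarrow> nat" where
  "btop k h = (GREATEST a. ((a + k) choose k) \<le> h)"

lemma choose_ge_Suc: "Suc a \<le> ((a + Suc k) choose (Suc k))"
proof (induction k)
  case 0 then show ?case by simp
next
  case (Suc k)
  have "((a + Suc (Suc k)) choose (Suc (Suc k))) = ((a + Suc k) choose (Suc k)) + ((a + Suc k) choose (Suc (Suc k)))"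
    by (simp add: binomial_Suc_Suc)
  then show ?case using Suc by linarith
qed

lemma choose_ge1: "k \<ge> 1 \<Longrightarrow> Suc a \<le> ((a + k) choose k)"
  using choose_ge_Suc[of a "k - 1"] by simp

lemma choose_strict: "k \<ge> 1 \<Longrightarrow> ((a + k) choose k) < ((Suc a + k) choose k)"
proof -
  assume k: "k \<ge> 1"
  then obtain k' where k': "k = Suc k'" by (cases k) auto
  have "((Suc a + k) choose k) = ((a + k) choose k') + ((a + k) choose k)"
    using k' by (simp add: binomial_Suc_Suc)
  moreover have "((a + k) choose k') > 0" using k' by simp
  ultimately show ?thesis by simp
qed

lemma choose_strict_mono: "k \<ge> 1 \<Longrightarrow> a < b \<Longrightarrow> ((a + k) choose k) < ((b + k) choose k)"
proof (induction b)
  case 0 then show ?case by simp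
next
  case (Suc b)
  then show ?case using choose_strict[of k b]
    by (metis less_Suc_eq order.strict_trans)
qed

lemma choose_mono_top: "a \<le> b \<Longrightarrow> ((a + k) choose k) \<le> ((b + k) choose k)"
  by (rule binomial_right_mono) simp

lemma btop_props:
  assumes "k \<ge> 1" "h \<ge> 1"
  shows "((btop k h + k) choose k) \<le> h" "h < ((Suc (btop k h) + k) choose k)"
proof -
  have ex: "((0 + k) choose k) \<le> h" using assms by simp
  have bd: "\<forall>a. ((a + k) choose k) \<le> h \<longrightarrow> a \<le> h"
    using choose_ge1[OF assms(1)] by (meson Suc_leD le_trans)
  show 1: "((btop k h + k) choose k) \<le> h"
    unfolding btop_def by (rule GreatestI_nat[where P="\<lambda>a. ((a + k) choose k) \<le> h", OF ex]) (use bd in auto)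
  show "h < ((Suc (btop k h) + k) choose k)"
  proof (rule ccontr)
    assume "\<not> ?thesis"
    then have "((Suc (btop k h) + k) choose k) \<le> h" by simp
    then have "Suc (btop k h) \<le> btop k h"
      unfolding btop_def by (rule Greatest_le_nat[where P="\<lambda>a. ((a + k) choose k) \<le> h"]) (use bd in auto)
    then show False by simp
  qed
qed

lemma btop_eq:
  assumes "k \<ge> 1" "((a + k) choose k) \<le> h" "h < ((Suc a + k) choose k)"
  shows "btop k h = a"
proof -
  have h1: "h \<ge> 1" using assms(2) by (metis One_nat_def Suc_le_eq add_diff_cancel_right' binomial_n_n le_add2 le_trans  zero_less_binomial_iff le_less_trans)
  have bd: "\<forall>a. ((a + k) choose k) \<le> h \<longrightarrow> a \<le> h"
    using choose_ge1[OF assms(1)] by (meson Suc_leD le_trans)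
  have ge: "a \<le> btop k h"
    unfolding btop_def by (rule Greatest_le_nat[where P="\<lambda>a. ((a + k) choose k) \<le> h", OF assms(2)]) (use bd in auto)
  show ?thesis
  proof (rule ccontr)
    assume "btop k h \<noteq> a"
    then have "Suc a \<le> btop k h" using ge by simp
    then have "((Suc a + k) choose k) \<le> ((btop k h + k) choose k)" by (rule choose_mono_top)
    also have "\<dots> \<le> h" using btop_props[OF assms(1) h1] by simp
    finally show False using assms(3) by simp
  qed
qed

fun U :: "nat \<Rightarrow> nat \<Rightarrow> nat" where
  "U 0 h = h"
| "U (Suc k) h = (if h = 0 then 0 else
     ((Suc (btop (Suc k) h) + Suc k) choose (Suc k)) + U k (h - ((btop (Suc k) h + Suc k) choose (Suc k))))"

fun L :: "nat \<Rightarrow> nat \<Rightarrow> nat" where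
  "L 0 h = 0"
| "L (Suc k) h = (if h = 0 then 0 else
     ((btop (Suc k) h + k) choose k) + L k (h - ((btop (Suc k) h + Suc k) choose (Suc k))))"

declare U.simps(2)[simp del] L.simps(2)[simp del]

lemma U_0[simp]: "U k 0 = 0" by (cases k) (auto simp: U.simps)
lemma L_0[simp]: "L k 0 = 0" by (cases k) (auto simp: L.simps)

lemma pascal: "((Suc a + Suc k) choose (Suc k)) = ((a + Suc k) choose k) + ((a + Suc k) choose (Suc k))"
  by (simp add: binomial_Suc_Suc)

lemma U_block:
  assumes "s < ((a + Suc k) choose k)"
  shows "U (Suc k) (((a + Suc k) choose (Suc k)) + s) = ((Suc a + Suc k) choose (Suc k)) + U k s"
proof -
  let ?h = "((a + Suc k) choose (Suc k)) + s"
  have "btop (Suc k) ?h = a"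
    by (rule btop_eq) (use assms pascal[of a k] in auto)
  moreover have "?h \<noteq> 0" using choose_ge_Suc[of a k] by simp
  ultimately show ?thesis by (simp add: U.simps L.simps)
qed

lemma L_block:
  assumes "s < ((a + Suc k) choose k)"
  shows "L (Suc k) (((a + Suc k) choose (Suc k)) + s) = ((a + k) choose k) + L k s"
proof -
  let ?h = "((a + Suc k) choose (Suc k)) + s"
  have "btop (Suc k) ?h = a"
    by (rule btop_eq) (use assms pascal[of a k] in auto)
  moreover have "?h \<noteq> 0" using choose_ge_Suc[of a k] by simp
  ultimately show ?thesis by (simp add: U.simps L.simps)
qed

lemma U_single: "U (Suc k) (((a + Suc k) choose (Suc k))) = ((Suc a + Suc k) choose (Suc k))"
  using U_block[of 0 a k] by simp

lemma L_single: "L (Suc k) (((a + Suc k) choose (Suc k))) = ((a + k) choose k)"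
  using L_block[of 0 a k] by simp

lemma U_D:
  assumes "s \<le> ((a + Suc k) choose k)"
  shows "U (Suc k) (((a + Suc k) choose (Suc k)) + s) = ((Suc a + Suc k) choose (Suc k)) + U k s"
proof (cases "s < ((a + Suc k) choose k)")
  case True then show ?thesis by (rule U_block)
next
  case False
  then have s: "s = ((a + Suc k) choose k)" using assms by simp
  have "U (Suc k) (((a + Suc k) choose (Suc k)) + s) = U (Suc k) (((Suc a + Suc k) choose (Suc k)))"
    using s pascal[of a k] by (simp add: add.commute)
  also have "\<dots> = ((Suc (Suc a) + Suc k) choose (Suc k))" by (rule U_single)
  also have "\<dots> = ((Suc a + Suc k) choose (Suc k)) + U k s"
  proof (cases k)
    case 0 then show ?thesis using s by simp
  next
    case (Suc k')
    have "U k s = U (Suc k') (((Suc a + Suc k') choose (Suc k')))" using s Suc by simp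
    also have "\<dots> = ((Suc (Suc a) + Suc k') choose (Suc k'))" by (rule U_single)
    finally have "U k s = ((Suc (Suc a) + Suc k') choose (Suc k'))" .
    then show ?thesis using Suc pascal[of "Suc a" k] by simp
  qed
  finally show ?thesis .
qed

lemma L_D:
  assumes "s \<le> ((a + Suc k) choose k)"
  shows "L (Suc k) (((a + Suc k) choose (Suc k)) + s) = ((a + k) choose k) + L k s"
proof (cases "s < ((a + Suc k) choose k)")
  case True then show ?thesis by (rule L_block)
next
  case False
  then have s: "s = ((a + Suc k) choose k)" using assms by simp
  have "L (Suc k) (((a + Suc k) choose (Suc k)) + s) = L (Suc k) (((Suc a + Suc k) choose (Suc k)))"
    using s pascal[of a k] by (simp add: add.commute)
  also have "\<dots> = ((Suc a + k) choose k)" by (rule L_single)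
  also have "\<dots> = ((a + k) choose k) + L k s"
  proof (cases k)
    case 0 then show ?thesis using s by simp
  next
    case (Suc k')
    have "L k s = L (Suc k') (((Suc a + Suc k') choose (Suc k')))" using s Suc by simp
    also have "\<dots> = ((Suc a + k') choose k')" by (rule L_single)
    finally have "L k s = ((Suc a + k') choose k')" .
    then show ?thesis using Suc pascal[of a k'] by simp
  qed
  finally show ?thesis .
qed

lemma decomp:
  assumes "h \<ge> 1"
  obtains a s where "h = ((a + Suc k) choose (Suc k)) + s" "s < ((a + Suc k) choose k)"
proof -
  let ?a = "btop (Suc k) h"
  have 1: "((?a + Suc k) choose (Suc k)) \<le> h" and 2: "h < ((Suc ?a + Suc k) choose (Suc k))"
    using btop_props[of "Suc k" h] assms by auto
  show ?thesis
    by (rule that[of ?a "h - ((?a + Suc k) choose (Suc k))"]) (use 1 2 pascal[of ?a k] in auto)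
qed

lemma U_pos: "h \<ge> 1 \<Longrightarrow> U (Suc k) h \<ge> 1"
proof -
  assume "h \<ge> 1"
  then obtain a s where x: "h = ((a + Suc k) choose (Suc k)) + s" and s: "s < ((a + Suc k) choose k)"
    using decomp[of h k] by auto
  then show ?thesis using U_block[OF s] choose_ge_Suc[of "Suc a" k] by simp
qed

lemma L1: "y \<ge> 1 \<Longrightarrow> L (Suc 0) y = 1" by (simp add: L.simps)

lemma U_strict_mono: "x < y \<Longrightarrow> U k x < U k y"
proof (induction k arbitrary: x y)
  case 0 then show ?case by simp
next
  case (Suc k)
  show ?case
  proof (cases "x = 0")
    case True then show ?thesis using U_pos[of y k] Suc.prems by simp
  next
    case False
    obtain a s where x: "x = ((a + Suc k) choose (Suc k)) + s" and s: "s < ((a + Suc k) choose k)"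
      using decomp[of x k] False by auto
    obtain b t where y: "y = ((b + Suc k) choose (Suc k)) + t" and t: "t < ((b + Suc k) choose k)"
      using decomp[of y k] Suc.prems by auto
    have Ux: "U (Suc k) x = ((Suc a + Suc k) choose (Suc k)) + U k s" using U_block[OF s] x by simp
    have Uy: "U (Suc k) y = ((Suc b + Suc k) choose (Suc k)) + U k t" using U_block[OF t] y by simp
    have "a \<le> b"
    proof (rule ccontr)
      assume "\<not> a \<le> b"
      then have "Suc b \<le> a" by simp
      then have "((Suc b + Suc k) choose (Suc k)) \<le> ((a + Suc k) choose (Suc k))" by (rule choose_mono_top)
      moreover have "y < ((Suc b + Suc k) choose (Suc k))" using y t pascal[of b k] by simp
      ultimately show False using x Suc.prems by simp
    qed
    show ?thesis
    proof (cases "a = b")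
      case True
      then have "s < t" using x y Suc.prems by simp
      then show ?thesis using Suc.IH[of s t] Ux Uy True by simp
    next
      case False
      then have ab: "Suc a \<le> b" using \<open>a \<le> b\<close> by simp
      have "U k s < U k ((a + Suc k) choose k)" using Suc.IH[OF s] .
      then have "U (Suc k) x < ((Suc a + Suc k) choose (Suc k)) + U k ((a + Suc k) choose k)" using Ux by simp
      also have "\<dots> = U (Suc k) (((a + Suc k) choose (Suc k)) + ((a + Suc k) choose k))"
        using U_D[of "(a + Suc k) choose k" a k] by simp
      also have "\<dots> = U (Suc k) ((Suc a + Suc k) choose (Suc k))" using pascal[of a k] by (simp add: add.commute)
      also have "\<dots> = ((Suc (Suc a) + Suc k) choose (Suc k))" by (rule U_single)
      also have "\<dots> \<le> ((Suc b + Suc k) choose (Suc k))" by (rule choose_mono_top) (use ab in simp)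
      also have "\<dots> \<le> U (Suc k) y" using Uy by simp
      finally show ?thesis .
    qed
  qed
qed

lemma U_mono: "x \<le> y \<Longrightarrow> U k x \<le> U k y"
  using U_strict_mono[of x y k] by (cases "x = y") auto

lemma U_le_iff: "U k x \<le> U k y \<longleftrightarrow> x \<le> y"
  using U_strict_mono[of y x k] U_mono[of x y k] by (meson leD le_less_linear)

lemma L_mono: "x \<le> y \<Longrightarrow> L k x \<le> L k y"
proof (induction k arbitrary: x y)
  case 0 then show ?case by simp
next
  case (Suc k)
  show ?case
  proof (cases "x = 0")
    case True then show ?thesis by simp
  next
    case False
    obtain a s where x: "x = ((a + Suc k) choose (Suc k)) + s" and s: "s < ((a + Suc k) choose k)"
      using decomp[of x k] False by auto
    obtain b t where y: "y = ((b + Suc k) choose (Suc k)) + t" and t: "t < ((b + Suc k) choose k)"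
      using decomp[of y k] Suc.prems False by auto
    have Lx: "L (Suc k) x = ((a + k) choose k) + L k s" using L_block[OF s] x by simp
    have Ly: "L (Suc k) y = ((b + k) choose k) + L k t" using L_block[OF t] y by simp
    have "a \<le> b"
    proof (rule ccontr)
      assume "\<not> a \<le> b"
      then have "Suc b \<le> a" by simp
      then have "((Suc b + Suc k) choose (Suc k)) \<le> ((a + Suc k) choose (Suc k))" by (rule choose_mono_top)
      moreover have "y < ((Suc b + Suc k) choose (Suc k))" using y t pascal[of b k] by simp
      ultimately show False using x Suc.prems by simp
    qed
    show ?thesis
    proof (cases "a = b")
      case True
      then have "s \<le> t" using x y Suc.prems by simp
      then show ?thesis using Suc.IH[of s t] Lx Ly True by simp
    next
      case False
      then have ab: "Suc a \<le> b" using \<open>a \<le> b\<close> by simp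
      have "L k s \<le> L k ((a + Suc k) choose k)" using Suc.IH s by simp
      then have "L (Suc k) x \<le> ((a + k) choose k) + L k ((a + Suc k) choose k)" using Lx by simp
      also have "\<dots> = L (Suc k) (((a + Suc k) choose (Suc k)) + ((a + Suc k) choose k))"
        using L_D[of "(a + Suc k) choose k" a k] by simp
      also have "\<dots> = L (Suc k) ((Suc a + Suc k) choose (Suc k))" using pascal[of a k] by (simp add: add.commute)
      also have "\<dots> = ((Suc a + k) choose k)" by (rule L_single)
      also have "\<dots> \<le> ((b + k) choose k)" by (rule choose_mono_top) (use ab in simp)
      also have "\<dots> \<le> L (Suc k) y" using Ly by simp
      finally show ?thesis .
    qed
  qed
qed

lemma choose_le_Suc: "((a + k) choose k) \<le> ((a + Suc k) choose (Suc k))"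
proof -
  have "((a + Suc k) choose (Suc k)) = ((a + k) choose k) + ((a + k) choose (Suc k))"
    by (simp add: binomial_Suc_Suc)
  then show ?thesis by simp
qed

lemma L_le: "L k h \<le> h"
proof (induction k arbitrary: h)
  case 0 then show ?case by simp
next
  case (Suc k)
  show ?case
  proof (cases "h = 0")
    case True then show ?thesis by simp
  next
    case False
    obtain a s where x: "h = ((a + Suc k) choose (Suc k)) + s" and s: "s < ((a + Suc k) choose k)"
      using decomp[of h k] False by auto
    have "L (Suc k) h = ((a + k) choose k) + L k s" using L_block[OF s] x by simp
    then show ?thesis using Suc.IH[of s] choose_le_Suc[of a k] x by simp
  qed
qed

lemma TL: "U (Suc k) h = h + U k (L (Suc k) h)"
proof (induction k arbitrary: h)
  case 0
  show ?case
  proof (cases "h = 0")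
    case True then show ?thesis by simp
  next
    case False
    obtain a s where x: "h = ((a + Suc 0) choose (Suc 0)) + s" and s: "s < ((a + Suc 0) choose 0)"
      using decomp[of h 0] False by auto
    then show ?thesis using U_block[OF s] L_block[OF s] by simp
  qed
next
  case (Suc k)
  show ?case
  proof (cases "h = 0")
    case True then show ?thesis by simp
  next
    case False
    obtain a s where x: "h = ((a + Suc (Suc k)) choose (Suc (Suc k))) + s" and s: "s < ((a + Suc (Suc k)) choose (Suc k))"
      using decomp[of h "Suc k"] False by auto
    have U1: "U (Suc (Suc k)) h = ((Suc a + Suc (Suc k)) choose (Suc (Suc k))) + U (Suc k) s"
      using U_block[OF s] x by simp
    have L1: "L (Suc (Suc k)) h = ((a + Suc k) choose (Suc k)) + L (Suc k) s"
      using L_block[OF s] x by simp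
    have "L (Suc k) s \<le> L (Suc k) ((Suc a + Suc k) choose (Suc k))"
      using L_mono s by (simp add: add.commute)
    also have "\<dots> = ((Suc a + k) choose k)" by (rule L_single)
    finally have Lb: "L (Suc k) s \<le> ((a + Suc k) choose k)" by simp
    have "U (Suc k) (L (Suc (Suc k)) h) = ((Suc a + Suc k) choose (Suc k)) + U k (L (Suc k) s)"
      using U_D[OF Lb] L1 by simp
    moreover have "U (Suc k) s = s + U k (L (Suc k) s)" by (rule Suc.IH)
    moreover have "((Suc a + Suc (Suc k)) choose (Suc (Suc k))) = ((a + Suc (Suc k)) choose (Suc k)) + ((a + Suc (Suc k)) choose (Suc (Suc k)))"
      by (rule pascal)
    ultimately show ?thesis using U1 x by simp
  qed
qed

lemma U_ge: "h \<le> U k h"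
  by (cases k) (simp_all add: TL)

lemma F3core: "h < U (Suc k) (Suc (h - L (Suc k) h))"
proof (induction k arbitrary: h)
  case 0
  show ?case
  proof (cases "h = 0")
    case True then show ?thesis by (simp add: U.simps)
  next
    case False
    have "U (Suc 0) (Suc (h - L (Suc 0) h)) = Suc (h - L (Suc 0) h) + L (Suc 0) (Suc (h - L (Suc 0) h))" using TL[of 0] by simp
    then show ?thesis using L1[of h] L1[of "Suc (h - L (Suc 0) h)"] False by simp
  qed
next
  case (Suc k)
  let ?k = "Suc k"
  show ?case
  proof (cases "h = 0")
    case True then show ?thesis using U_ge[of 1 "Suc ?k"] by simp
  next
    case False
    obtain a s where x: "h = ((a + Suc ?k) choose (Suc ?k)) + s" and s: "s < ((a + Suc ?k) choose ?k)"
      using decomp[of h ?k] False by auto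
    have L1: "L (Suc ?k) h = ((a + ?k) choose ?k) + L ?k s"
      using L_block[OF s] x by simp
    have Ls: "L ?k s \<le> s" by (rule L_le)
    show ?thesis
    proof (cases a)
      case 0
      have "s < Suc (Suc k)" using s 0 by simp
      have "U (Suc ?k) 1 = ((Suc 0 + Suc ?k) choose (Suc ?k))" using U_single[of ?k 0] by simp
      also have "\<dots> = Suc (Suc (Suc k))" by simp
      finally have "U (Suc ?k) 1 = Suc (Suc (Suc k))" .
      moreover have "U (Suc ?k) 1 \<le> U (Suc ?k) (Suc (h - L (Suc ?k) h))" by (rule U_mono) simp
      moreover have "h = Suc s" using x 0 by simp
      ultimately show ?thesis using \<open>s < Suc (Suc k)\<close> by simp
    next
      case (Suc a')
      have P: "((a + Suc ?k) choose (Suc ?k)) = ((a' + Suc ?k) choose ?k) + ((a' + Suc ?k) choose (Suc ?k))"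
        using pascal[of a' ?k] Suc by simp
      have eq: "Suc (h - L (Suc ?k) h) = ((a' + Suc ?k) choose (Suc ?k)) + Suc (s - L ?k s)"
        using x L1 P Ls Suc by simp
      show ?thesis
      proof (cases "Suc (s - L ?k s) \<le> ((a' + Suc ?k) choose ?k)")
        case True
        have "U (Suc ?k) (Suc (h - L (Suc ?k) h)) = ((Suc a' + Suc ?k) choose (Suc ?k)) + U ?k (Suc (s - L ?k s))"
          using U_D[OF True] eq by simp
        moreover have "s < U ?k (Suc (s - L ?k s))" by (rule Suc.IH)
        ultimately show ?thesis using x Suc by simp
      next
        case False
        then have "((a + Suc ?k) choose (Suc ?k)) < Suc (h - L (Suc ?k) h)" using eq P by simp
        then have "U (Suc ?k) ((a + Suc ?k) choose (Suc ?k)) < U (Suc ?k) (Suc (h - L (Suc ?k) h))"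
          by (rule U_strict_mono)
        moreover have "U (Suc ?k) ((a + Suc ?k) choose (Suc ?k)) = ((Suc a + Suc ?k) choose (Suc ?k))" by (rule U_single)
        moreover have "((Suc a + Suc ?k) choose (Suc ?k)) = ((a + Suc ?k) choose ?k) + ((a + Suc ?k) choose (Suc ?k))"
          by (rule pascal)
        ultimately show ?thesis using x s by simp
      qed
    qed
  qed
qed

lemma F3:
  assumes "U (Suc k) w \<le> h"
  shows "U (Suc k) h \<le> h + U k (h - w)"
proof -
  have "w \<le> h - L (Suc k) h"
  proof (rule ccontr)
    assume "\<not> ?thesis"
    then have "Suc (h - L (Suc k) h) \<le> w" by simp
    then have "U (Suc k) (Suc (h - L (Suc k) h)) \<le> U (Suc k) w" by (rule U_mono)
    then show False using F3core[of h k] assms by simp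
  qed
  then have "L (Suc k) h \<le> h - w" using L_le[of "Suc k" h] by simp
  then have "U k (L (Suc k) h) \<le> U k (h - w)" by (rule U_mono)
  then show ?thesis using TL[of k h] by simp
qed

lemma F4:
  assumes "U k c \<le> U (Suc k) h - h"
  shows "c \<le> L (Suc k) h"
  using assms TL[of k h] U_le_iff by simp

lemma binrep_chain:
  assumes "binrep k h j f" "j \<le> m" "m \<le> k"
  shows "f m \<le> f k"
proof -
  have step: "f i \<le> f (Suc i)" if "j \<le> i" "i < k" for i
    using assms(1) that unfolding binrep_def by blast
  have "\<forall>i. m + i \<le> k \<longrightarrow> f m \<le> f (m + i)"
  proof
    fix i show "m + i \<le> k \<longrightarrow> f m \<le> f (m + i)"
    proof (induction i)
      case 0 then show ?case by simp
    next
      case (Suc i)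
      show ?case
      proof
        assume a: "m + Suc i \<le> k"
        then have "f m \<le> f (m + i)" using Suc by simp
        moreover have "f (m + i) \<le> f (Suc (m + i))" by (rule step) (use a assms(2) in auto)
        ultimately show "f m \<le> f (m + Suc i)" by simp
      qed
    qed
  qed
  note A = this[rule_format, of "k - m"]
  have "m + (k - m) \<le> k" using assms(3) by simp
  then have "f m \<le> f (m + (k - m))" using A by blast
  then show ?thesis using assms(3) by simp
qed

lemma binrep_bound:
  assumes "binrep k h j f" "f k \<le> F"
  shows "h < ((F + Suc k) choose k)"
proof -
  have "h = (\<Sum>m=j..k. ((f m + m) choose m))" using assms unfolding binrep_def by simp
  also have "\<dots> \<le> (\<Sum>m=j..k. ((F + m) choose m))"
    by (rule sum_mono, rule choose_mono_top) (use binrep_chain[OF assms(1)] assms(2) in force)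
  also have "\<dots> \<le> (\<Sum>m\<in>{1..k}. ((F + m) choose m))"
    by (rule sum_mono2) (use assms(1) in \<open>auto simp: binrep_def\<close>)
  also have "\<dots> < (\<Sum>m\<in>{..k}. ((F + m) choose m))"
  proof -
    have "{..k} = insert 0 {1..k}" by auto
    then show ?thesis by simp
  qed
  also have "\<dots> = ((F + Suc k) choose k)" using sum_choose_lower[of F k] by simp
  finally show ?thesis .
qed

lemma binrep_eval:
  assumes "binrep k h j f"
  shows "(\<Sum>m=j..k. ((f m + m + 1) choose m)) = U k h \<and> (\<Sum>m=j..k. ((f m + m - 1) choose (m - 1))) = L k h"
  using assms
proof (induction k arbitrary: h)
  case 0 then show ?case by (auto simp: binrep_def)
next
  case (Suc k)
  have j: "1 \<le> j" "j \<le> Suc k" and hs: "h = (\<Sum>m=j..Suc k. ((f m + m) choose m))"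
    using Suc.prems by (auto simp: binrep_def)
  show ?case
  proof (cases "j = Suc k")
    case True
    then have h: "h = ((f (Suc k) + Suc k) choose (Suc k))" using hs by simp
    show ?thesis using U_single[of k "f (Suc k)"] L_single[of k "f (Suc k)"] h True by simp
  next
    case False
    then have jk: "j \<le> k" using j by simp
    define h' where "h' = (\<Sum>m=j..k. ((f m + m) choose m))"
    have b': "binrep k h' j f" using Suc.prems jk j unfolding binrep_def h'_def by auto
    have h: "h = ((f (Suc k) + Suc k) choose (Suc k)) + h'" using hs jk unfolding h'_def
      by (simp add: sum.cl_ivl_Suc)
    have fk: "f k \<le> f (Suc k)" using Suc.prems jk unfolding binrep_def by auto
    have lt: "h' < ((f (Suc k) + Suc k) choose k)" using binrep_bound[OF b' fk] .
    have IH: "(\<Sum>m=j..k. ((f m + m + 1) choose m)) = U k h' \<and> (\<Sum>m=j..k. ((f m + m - 1) choose (m - 1))) = L k h'"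
      by (rule Suc.IH[OF b'])
    have "U (Suc k) h = ((Suc (f (Suc k)) + Suc k) choose (Suc k)) + U k h'"
      using U_block[OF lt] h by simp
    moreover have "L (Suc k) h = ((f (Suc k) + k) choose k) + L k h'"
      using L_block[OF lt] h by simp
    ultimately show ?thesis using IH jk by (simp add: sum.cl_ivl_Suc)
  qed
qed


lemma binrep_exists:
  assumes "h \<ge> 1"
  shows "\<exists>j f. binrep (Suc k) h j f"
  using assms
proof (induction k arbitrary: h)
  case 0
  obtain a s where x: "h = ((a + Suc 0) choose (Suc 0)) + s" and s: "s < ((a + Suc 0) choose 0)"
    using decomp[of h 0] 0 by auto
  have "binrep (Suc 0) h 1 (\<lambda>_. a)" using x s unfolding binrep_def by simp
  then show ?case by blast
next
  case (Suc k)
  obtain a s where x: "h = ((a + Suc (Suc k)) choose (Suc (Suc k))) + s" and s: "s < ((a + Suc (Suc k)) choose (Suc k))"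
    using decomp[of h "Suc k"] Suc.prems by auto
  show ?case
  proof (cases "s = 0")
    case True
    have "binrep (Suc (Suc k)) h (Suc (Suc k)) (\<lambda>_. a)" using x True unfolding binrep_def by simp
    then show ?thesis by blast
  next
    case False
    then obtain j g where g: "binrep (Suc k) s j g" using Suc.IH[of s] by auto
    have jk: "1 \<le> j" "j \<le> Suc k" using g by (auto simp: binrep_def)
    have "((g (Suc k) + Suc k) choose (Suc k)) \<le> s"
    proof -
      have "s = (\<Sum>m=j..Suc k. ((g m + m) choose m))" using g by (simp add: binrep_def)
      also have "\<dots> = (\<Sum>m=j..k. ((g m + m) choose m)) + ((g (Suc k) + Suc k) choose (Suc k))"
        using jk by (simp add: sum.cl_ivl_Suc)
      finally show ?thesis by simp
    qed
    then have gk: "g (Suc k) \<le> a"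
    proof -
      assume le: "((g (Suc k) + Suc k) choose (Suc k)) \<le> s"
      show ?thesis
      proof (rule ccontr)
        assume "\<not> ?thesis"
        then have "Suc a \<le> g (Suc k)" by simp
        then have "((Suc a + Suc k) choose (Suc k)) \<le> ((g (Suc k) + Suc k) choose (Suc k))" by (rule choose_mono_top)
        then show False using le s by simp
      qed
    qed
    define f where "f = g(Suc (Suc k) := a)"
    have "binrep (Suc (Suc k)) h j f"
      unfolding binrep_def
    proof (intro conjI allI impI)
      show "1 \<le> j" "j \<le> Suc (Suc k)" using jk by auto
    next
      fix m assume m: "j \<le> m \<and> m < Suc (Suc k)"
      show "f m \<le> f (Suc m)"
      proof (cases "m = Suc k")
        case True then show ?thesis using gk by (simp add: f_def)
      next
        case False
        then show ?thesis using g m unfolding binrep_def f_def by auto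
      qed
    next
      have "(\<Sum>m=j..Suc (Suc k). ((f m + m) choose m)) = (\<Sum>m=j..Suc k. ((f m + m) choose m)) + ((a + Suc (Suc k)) choose (Suc (Suc k)))"
        using jk by (simp add: sum.cl_ivl_Suc f_def)
      also have "(\<Sum>m=j..Suc k. ((f m + m) choose m)) = (\<Sum>m=j..Suc k. ((g m + m) choose m))"
        by (rule sum.cong) (auto simp: f_def)
      also have "\<dots> = s" using g by (simp add: binrep_def)
      finally show "h = (\<Sum>m=j..Suc (Suc k). ((f m + m) choose m))" using x by simp
    qed
    then show ?thesis by blast
  qed
qed

lemma mac_up_U: "k \<ge> 1 \<Longrightarrow> mac_up k h = U k h"
proof -
  assume k: "k \<ge> 1"
  show ?thesis
  proof (cases "h = 0")
    case True then show ?thesis by (simp add: mac_up_def)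
  next
    case False
    obtain k' where k': "k = Suc k'" using k by (cases k) auto
    have ex: "\<exists>p. case p of (j, f) \<Rightarrow> binrep k h j f" using binrep_exists[of h k'] False k' by auto
    define p where "p = (SOME p. case p of (j, f) \<Rightarrow> binrep k h j f)"
    have "case p of (j, f) \<Rightarrow> binrep k h j f" unfolding p_def by (rule someI_ex[OF ex])
    then obtain j f where p: "p = (j, f)" and b: "binrep k h j f" by (cases p) auto
    have "mac_up k h = (\<Sum>m=j..k. ((f m + m + 1) choose m))"
      using False k p unfolding mac_up_def p_def by simp
    then show ?thesis using binrep_eval[OF b] by simp
  qed
qed

lemma mac_low_L: "k \<ge> 1 \<Longrightarrow> mac_low k h = L k h"
proof -
  assume k: "k \<ge> 1"
  show ?thesis
  proof (cases "h = 0")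
    case True then show ?thesis by (simp add: mac_low_def)
  next
    case False
    obtain k' where k': "k = Suc k'" using k by (cases k) auto
    have ex: "\<exists>p. case p of (j, f) \<Rightarrow> binrep k h j f" using binrep_exists[of h k'] False k' by auto
    define p where "p = (SOME p. case p of (j, f) \<Rightarrow> binrep k h j f)"
    have "case p of (j, f) \<Rightarrow> binrep k h j f" unfolding p_def by (rule someI_ex[OF ex])
    then obtain j f where p: "p = (j, f)" and b: "binrep k h j f" by (cases p) auto
    have "mac_low k h = (\<Sum>m=j..k. ((f m + m - 1) choose (m - 1)))"
      using False k p unfolding mac_low_def p_def by simp
    then show ?thesis using binrep_eval[OF b] by simp
  qed
qed

lemma mac_up_0: "h \<le> 1 \<Longrightarrow> mac_up 0 h = h"
  by (cases h) (auto simp: mac_up_def)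

lemma hbar_props:
  assumes "k \<ge> 1" "h \<ge> 2"
  shows "((bar_alpha k h + k) choose k) < h" "h \<le> ((Suc (bar_alpha k h) + k) choose k)"
    "hbar k h = h - ((bar_alpha k h + k) choose k)"
proof -
  let ?A = "{a. ((a + k) choose k) < h}"
  have fin: "finite ?A"
  proof (rule finite_subset[of _ "{..h}"])
    show "?A \<subseteq> {..h}" using choose_ge1[OF assms(1)] by (auto, meson Suc_leD le_trans less_imp_le)
  qed simp
  have ne: "0 \<in> ?A" using assms by simp
  have ba: "bar_alpha k h = Max ?A" using assms by (simp add: bar_alpha_def)
  show "((bar_alpha k h + k) choose k) < h" using Max_in[OF fin] ne ba by (metis (mono_tags, lifting) empty_iff mem_Collect_eq)
  show "h \<le> ((Suc (bar_alpha k h) + k) choose k)"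
  proof (rule ccontr)
    assume "\<not> ?thesis"
    then have "Suc (bar_alpha k h) \<in> ?A" by simp
    then have "Suc (bar_alpha k h) \<le> Max ?A" using Max_ge[OF fin] by blast
    then show False using ba by simp
  qed
  show "hbar k h = h - ((bar_alpha k h + k) choose k)" using assms by (simp add: hbar_def)
qed

definition mons :: "nat set \<Rightarrow> nat \<Rightarrow> (nat \<Rightarrow> nat) set" where
  "mons S d = {a. (\<forall>k. a k \<noteq> 0 \<longrightarrow> k \<in> S) \<and> (\<Sum>k\<in>S. a k) = d}"

definition MS :: "nat set \<Rightarrow> (nat \<Rightarrow> nat) set \<Rightarrow> (nat \<Rightarrow> nat) set" where
  "MS S V = {xmul i v | i v. i \<in> S \<and> v \<in> V}"

definition shift :: "(nat \<Rightarrow> nat) \<Rightarrow> (nat \<Rightarrow> nat) \<Rightarrow> (nat \<Rightarrow> nat)" where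
  "shift c v = (\<lambda>k. v k + c k)"

definition pw :: "nat \<Rightarrow> nat \<Rightarrow> (nat \<Rightarrow> nat)" where
  "pw j t = (\<lambda>k. if k = j then t else 0)"

lemma monomials_eq: "monomials n d = mons {1..n} d"
  by (simp add: monomials_def mons_def)

lemma MV_eq: "MV n V = MS {1..n} V"
  by (simp add: MV_def MS_def)

lemma xmul_alt: "xmul i v = shift (pw i 1) v"
  by (auto simp: xmul_def shift_def pw_def fun_eq_iff)

lemma xmul_apply: "xmul i v k = (if k = i then Suc (v k) else v k)"
  by (simp add: xmul_def)

lemma xmul_inj: "xmul i u = xmul i v \<Longrightarrow> u = v"
  unfolding fun_eq_iff xmul_apply by (metis Suc_inject)

lemma inj_xmul: "inj (xmul i)"
  by (rule injI) (rule xmul_inj)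

lemma shift_inj: "inj (shift c)"
  by (rule injI) (auto simp: shift_def fun_eq_iff)

lemma xmul_shift: "xmul i (shift c v) = shift c (xmul i v)"
  by (auto simp: xmul_def shift_def fun_eq_iff)

lemma sum_shift: "(\<Sum>k\<in>S. shift c v k) = (\<Sum>k\<in>S. v k) + (\<Sum>k\<in>S. c k)"
  by (simp add: shift_def sum.distrib)

lemma sum_pw: "finite S \<Longrightarrow> (\<Sum>k\<in>S. pw j t k) = (if j \<in> S then t else 0)"
  by (simp add: pw_def)

lemma shift_mons:
  assumes "finite S" "v \<in> mons S d" "\<forall>k. c k \<noteq> 0 \<longrightarrow> k \<in> S" "(\<Sum>k\<in>S. c k) = e"
  shows "shift c v \<in> mons S (d + e)"
  using assms by (auto simp: mons_def sum_shift) (auto simp: shift_def)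

lemma shift_pw_mons:
  assumes "finite S" "v \<in> mons S d" "j \<in> S"
  shows "shift (pw j t) v \<in> mons S (d + t)"
  by (rule shift_mons) (use assms in \<open>auto simp: pw_def\<close>)

lemma xmul_mons:
  assumes "finite S" "v \<in> mons S d" "i \<in> S"
  shows "xmul i v \<in> mons S (Suc d)"
  using shift_pw_mons[OF assms, of 1] by (simp add: xmul_alt)

lemma MS_mons:
  assumes "finite S" "V \<subseteq> mons S d"
  shows "MS S V \<subseteq> mons S (Suc d)"
  using assms xmul_mons unfolding MS_def by blast

lemma MS_shift: "MS S (shift c ` V) = shift c ` MS S V"
proof (intro equalityI subsetI)
  fix w assume "w \<in> MS S (shift c ` V)"
  then obtain i v where "w = xmul i (shift c v)" "i \<in> S" "v \<in> V" unfolding MS_def by auto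
  then show "w \<in> shift c ` MS S V" unfolding MS_def by (auto simp: xmul_shift)
next
  fix w assume "w \<in> shift c ` MS S V"
  then obtain i v where "w = shift c (xmul i v)" "i \<in> S" "v \<in> V" unfolding MS_def by auto
  then have "w = xmul i (shift c v)" by (simp add: xmul_shift)
  then show "w \<in> MS S (shift c ` V)" unfolding MS_def using \<open>i \<in> S\<close> \<open>v \<in> V\<close> by blast
qed

lemma MS_Un: "MS S (A \<union> B) = MS S A \<union> MS S B"
  unfolding MS_def by blast

lemma MS_mono: "A \<subseteq> B \<Longrightarrow> MS S A \<subseteq> MS S B"
  unfolding MS_def by blast

lemma MS_finite: "finite S \<Longrightarrow> finite V \<Longrightarrow> finite (MS S V)"
proof -
  assume "finite S" "finite V"
  have "MS S V = (\<lambda>(i, v). xmul i v) ` (S \<times> V)" unfolding MS_def by auto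
  then show ?thesis using \<open>finite S\<close> \<open>finite V\<close> by simp
qed

lemma mons_support: "v \<in> mons S d \<Longrightarrow> k \<notin> S \<Longrightarrow> v k = 0"
  by (auto simp: mons_def)

lemma mons_le: "finite S \<Longrightarrow> v \<in> mons S d \<Longrightarrow> T \<subseteq> S \<Longrightarrow> (\<Sum>k\<in>T. v k) \<le> d"
  by (auto simp: mons_def intro!: sum_mono2)

lemma mons_mono_set:
  assumes "finite S" "T \<subseteq> S" "v \<in> mons T d"
  shows "v \<in> mons S d"
proof -
  have "(\<Sum>k\<in>S. v k) = (\<Sum>k\<in>T. v k)"
    by (rule sum.mono_neutral_right) (use assms in \<open>auto simp: mons_def\<close>)
  then show ?thesis using assms by (auto simp: mons_def)
qed

lemma mons_insert_decomp:
  assumes "finite T" "x \<notin> T"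
  shows "mons (insert x T) d = (\<Union>t\<in>{..d}. (\<lambda>b. b(x := t)) ` mons T (d - t))"
proof (intro equalityI subsetI)
  fix a assume a: "a \<in> mons (insert x T) d"
  have s: "(\<Sum>k\<in>insert x T. a k) = a x + (\<Sum>k\<in>T. a k)" using assms by simp
  let ?b = "a(x := 0)"
  have "(\<Sum>k\<in>T. ?b k) = (\<Sum>k\<in>T. a k)" by (rule sum.cong) (use assms in auto)
  then have "?b \<in> mons T (d - a x)" using a s by (auto simp: mons_def)
  moreover have "a x \<le> d" using a s by (simp add: mons_def)
  moreover have "a = ?b(x := a x)" by simp
  ultimately show "a \<in> (\<Union>t\<in>{..d}. (\<lambda>b. b(x := t)) ` mons T (d - t))" by blast
next
  fix a assume "a \<in> (\<Union>t\<in>{..d}. (\<lambda>b. b(x := t)) ` mons T (d - t))"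
  then obtain t b where t: "t \<le> d" and b: "b \<in> mons T (d - t)" and a: "a = b(x := t)" by auto
  have "(\<Sum>k\<in>T. a k) = (\<Sum>k\<in>T. b k)" by (rule sum.cong) (use assms a in auto)
  then have "(\<Sum>k\<in>insert x T. a k) = t + (d - t)" using assms a b by (simp add: mons_def)
  then show "a \<in> mons (insert x T) d" using t a b by (auto simp: mons_def)
qed

lemma mons_empty: "mons {} d = (if d = 0 then {\<lambda>_. 0} else {})"
  by (auto simp: mons_def fun_eq_iff)

lemma mons_finite:
  assumes "finite S"
  shows "finite (mons S d)"
  using assms
proof (induction S arbitrary: d rule: finite_induct)
  case empty then show ?case by (simp add: mons_empty)
next
  case (insert x T)
  show ?case unfolding mons_insert_decomp[OF insert.hyps] using insert.IH by auto
qed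

lemma card_mons_insert:
  assumes "finite S" "x \<notin> S"
  shows "card (mons (insert x S) d) = (card S + d) choose d"
  using assms
proof (induction S arbitrary: x d rule: finite_induct)
  case empty
  have "mons {x} d = {pw x d}"
  proof -
    have "a = pw x d" if "a \<in> mons {x} d" for a
      using that by (auto simp: mons_def pw_def fun_eq_iff)
    moreover have "pw x d \<in> mons {x} d" by (auto simp: mons_def pw_def)
    ultimately show ?thesis by blast
  qed
  then show ?case by simp
next
  case (insert y S)
  let ?T = "insert y S"
  have fin: "finite ?T" using insert by simp
  have dec: "mons (insert x ?T) d = (\<Union>t\<in>{..d}. (\<lambda>b. b(x := t)) ` mons ?T (d - t))"
    by (rule mons_insert_decomp) (use insert in auto)
  have "card (mons (insert x ?T) d) = (\<Sum>t\<in>{..d}. card ((\<lambda>b. b(x := t)) ` mons ?T (d - t)))"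
    unfolding dec
  proof (rule card_UN_disjoint)
    show "finite {..d}" by simp
    show "\<forall>t\<in>{..d}. finite ((\<lambda>b. b(x := t)) ` mons ?T (d - t))" using mons_finite[OF fin] by auto
    show "\<forall>t\<in>{..d}. \<forall>t'\<in>{..d}. t \<noteq> t' \<longrightarrow> (\<lambda>b. b(x := t)) ` mons ?T (d - t) \<inter> (\<lambda>b. b(x := t')) ` mons ?T (d - t') = {}"
      by (auto dest!: fun_cong[where x = x])
  qed
  also have "\<dots> = (\<Sum>t\<in>{..d}. card (mons ?T (d - t)))"
  proof (rule sum.cong[OF refl])
    fix t assume "t \<in> {..d}"
    have "inj_on (\<lambda>b. b(x := t)) (mons ?T (d - t))"
    proof (rule inj_onI)
      fix b b' assume b: "b \<in> mons ?T (d - t)" "b' \<in> mons ?T (d - t)" "b(x := t) = b'(x := t)"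
      have "b x = 0" "b' x = 0" using b(1,2) insert.prems by (auto simp: mons_def)
      then show "b = b'" using b(3) by (metis fun_upd_triv fun_upd_upd)
    qed
    then show "card ((\<lambda>b. b(x := t)) ` mons ?T (d - t)) = card (mons ?T (d - t))" by (rule card_image)
  qed
  also have "\<dots> = (\<Sum>t\<in>{..d}. (card S + (d - t)) choose (d - t))"
    using insert.IH[of y] insert.hyps by simp
  also have "\<dots> = (\<Sum>t\<in>{..d}. (card S + t) choose t)"
  proof -
    have "(\<Sum>t\<in>{..d}. (card S + (d - t)) choose (d - t)) = (\<Sum>t\<in>{0..d}. (card S + (d + 0 - t)) choose (d + 0 - t))"
      by (simp add: atMost_atLeast0)
    also have "\<dots> = (\<Sum>t\<in>{0..d}. (card S + t) choose t)"
      by (rule sum.atLeastAtMost_rev[symmetric])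
    finally show ?thesis by (simp add: atMost_atLeast0)
  qed
  also have "\<dots> = Suc (card S + d) choose d" by (rule sum_choose_lower)
  finally show ?case using insert by simp
qed

lemma card_mons:
  assumes "finite S" "card S = Suc k"
  shows "card (mons S a) = ((a + k) choose k)"
proof -
  obtain x where x: "x \<in> S" using assms by (metis card.empty ex_in_conv nat.distinct(1))
  have "S = insert x (S - {x})" using x by auto
  then have "card (mons S a) = (card (S - {x}) + a) choose a"
    using card_mons_insert[of "S - {x}" x a] assms by simp
  also have "\<dots> = (k + a) choose a" using assms x by simp
  also have "\<dots> = (a + k) choose k" using binomial_symmetric[of a "k + a"] by (simp add: add.commute)
  finally show ?thesis .
qed

definition key :: "nat \<Rightarrow> nat \<Rightarrow> (nat \<Rightarrow> nat) \<Rightarrow> (nat \<Rightarrow> nat)" where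
  "key i j v = v(i := 0, j := 0)"

definition fib :: "nat \<Rightarrow> nat \<Rightarrow> (nat \<Rightarrow> nat) set \<Rightarrow> (nat \<Rightarrow> nat) \<Rightarrow> (nat \<Rightarrow> nat) set" where
  "fib i j X \<kappa> = {u \<in> X. key i j u = \<kappa>}"

definition cmpr :: "nat set \<Rightarrow> nat \<Rightarrow> nat \<Rightarrow> nat \<Rightarrow> (nat \<Rightarrow> nat) set \<Rightarrow> (nat \<Rightarrow> nat) set" where
  "cmpr S d i j X = {v \<in> mons S d. v j < card (fib i j X (key i j v))}"

lemma card_fibers:
  assumes "finite A" "finite K" "f ` A \<subseteq> K"
  shows "card A = (\<Sum>\<kappa>\<in>K. card {a \<in> A. f a = \<kappa>})"
  using sum.group[OF assms, of "\<lambda>_. 1::nat"] by simp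

lemma card_le_fibers:
  assumes "finite A" "finite B" "\<And>\<kappa>. card {a \<in> A. f a = \<kappa>} \<le> card {b \<in> B. f b = \<kappa>}"
  shows "card A \<le> card B"
proof -
  let ?K = "f ` (A \<union> B)"
  have "card A = (\<Sum>\<kappa>\<in>?K. card {a \<in> A. f a = \<kappa>})" by (rule card_fibers) (use assms in auto)
  also have "\<dots> \<le> (\<Sum>\<kappa>\<in>?K. card {b \<in> B. f b = \<kappa>})" by (rule sum_mono) (rule assms(3))
  also have "\<dots> = card B" by (rule card_fibers[symmetric]) (use assms in auto)
  finally show ?thesis .
qed

lemma key_xmul_i: "key i j (xmul i v) = key i j v"
  by (auto simp: key_def xmul_def fun_eq_iff)

lemma key_xmul_j: "key i j (xmul j v) = key i j v"
  by (auto simp: key_def xmul_def fun_eq_iff)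

lemma key_xmul_l: "l \<noteq> i \<Longrightarrow> l \<noteq> j \<Longrightarrow> key i j (xmul l v) = xmul l (key i j v)"
  by (auto simp: key_def xmul_def fun_eq_iff)

lemma key_i[simp]: "key i j v i = 0" and key_j[simp]: "key i j v j = 0"
  by (auto simp: key_def)

lemma key_other: "k \<noteq> i \<Longrightarrow> k \<noteq> j \<Longrightarrow> key i j v k = v k"
  by (simp add: key_def)

context
  fixes S :: "nat set" and i j :: nat
  assumes finS: "finite S" and iS: "i \<in> S" and jS: "j \<in> S" and ij: "i \<noteq> j"
begin

lemma sum_key:
  "(\<Sum>k\<in>S. v k) = v i + v j + (\<Sum>k\<in>S. key i j v k)"
proof -
  have a: "(\<Sum>k\<in>S. v k) = v i + (\<Sum>k\<in>S - {i}. v k)" using finS iS by (simp add: sum.remove)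
  have b: "(\<Sum>k\<in>S - {i}. v k) = v j + (\<Sum>k\<in>S - {i} - {j}. v k)" using finS jS ij by (simp add: sum.remove)
  have c: "(\<Sum>k\<in>S - {i} - {j}. v k) = (\<Sum>k\<in>S - {i} - {j}. key i j v k)"
    by (rule sum.cong) (auto simp: key_other)
  have d: "(\<Sum>k\<in>S. key i j v k) = key i j v i + (\<Sum>k\<in>S - {i}. key i j v k)" using finS iS by (simp add: sum.remove)
  have e: "(\<Sum>k\<in>S - {i}. key i j v k) = key i j v j + (\<Sum>k\<in>S - {i} - {j}. key i j v k)" using finS jS ij sum.remove[of "S - {i}" j "key i j v"] by simp
  show ?thesis using a b c d e by simp
qed

lemma mons_key_eq:
  assumes "u \<in> mons S e" "v \<in> mons S e" "key i j u = key i j v" "u j = v j"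
  shows "u = v"
proof -
  have "u i + u j + (\<Sum>k\<in>S. key i j u k) = e" "v i + v j + (\<Sum>k\<in>S. key i j v k) = e"
    using assms(1,2) sum_key[of u] sum_key[of v] by (auto simp: mons_def)
  then have "u i = v i" using assms(3,4) by simp
  show ?thesis
  proof
    fix k show "u k = v k"
    proof (cases "k = i \<or> k = j")
      case True then show ?thesis using \<open>u i = v i\<close> assms(4) by auto
    next
      case False
      then show ?thesis using assms(3) key_other[of k i j u] key_other[of k i j v] by auto
    qed
  qed
qed

lemma inj_fib:
  assumes "X \<subseteq> mons S e"
  shows "inj_on (\<lambda>v. v j) (fib i j X \<kappa>)"
proof (rule inj_onI)
  fix x y assume "x \<in> fib i j X \<kappa>" "y \<in> fib i j X \<kappa>" "x j = y j"
  then show "x = y" using assms mons_key_eq[of x e y] by (auto simp: fib_def)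
qed

lemma fib_j_le:
  assumes "v \<in> mons S e"
  shows "v j \<le> e - (\<Sum>k\<in>S. key i j v k)"
proof -
  have "v i + v j + (\<Sum>k\<in>S. key i j v k) = e" using assms sum_key[of v] by (simp add: mons_def)
  then show ?thesis by linarith
qed

lemma fib_fill:
  assumes "x \<in> mons S e" "t \<le> e - (\<Sum>k\<in>S. key i j x k)"
  defines "w \<equiv> (key i j x)(i := e - (\<Sum>k\<in>S. key i j x k) - t, j := t)"
  shows "w \<in> mons S e" "key i j w = key i j x" "w j = t"
proof -
  have ek: "(\<Sum>k\<in>S. key i j x k) \<le> e" using assms(1) sum_key[of x] by (simp add: mons_def)
  show "key i j w = key i j x" by (auto simp: w_def key_def fun_eq_iff)
  show "w j = t" by (simp add: w_def)
  have "(\<Sum>k\<in>S. w k) = w i + w j + (\<Sum>k\<in>S. key i j w k)" by (rule sum_key)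
  also have "key i j w = key i j x" by (auto simp: w_def key_def fun_eq_iff)
  finally have "(\<Sum>k\<in>S. w k) = e" using ij assms(2) ek by (simp add: w_def)
  moreover have "w k \<noteq> 0 \<Longrightarrow> k \<in> S" for k
    using assms(1) iS jS by (auto simp: w_def key_def mons_def split: if_splits)
  ultimately show "w \<in> mons S e" by (auto simp: mons_def)
qed

lemma fib_card_bound:
  assumes "X \<subseteq> mons S e" "x \<in> fib i j X \<kappa>"
  shows "card (fib i j X \<kappa>) \<le> Suc (e - (\<Sum>k\<in>S. \<kappa> k))"
proof -
  have "card (fib i j X \<kappa>) = card ((\<lambda>v. v j) ` fib i j X \<kappa>)"
    using card_image[OF inj_fib[OF assms(1)]] by simp
  also have "\<dots> \<le> card {..e - (\<Sum>k\<in>S. \<kappa> k)}"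
  proof (rule card_mono)
    show "(\<lambda>v. v j) ` fib i j X \<kappa> \<subseteq> {..e - (\<Sum>k\<in>S. \<kappa> k)}"
      using assms(1) fib_j_le by (auto simp: fib_def)
  qed simp
  finally show ?thesis by simp
qed

lemma comp_sub: "cmpr S d i j X \<subseteq> mons S d"
  by (auto simp: cmpr_def)

lemma fib_comp:
  assumes "X \<subseteq> mons S d"
  shows "(\<lambda>v. v j) ` fib i j (cmpr S d i j X) \<kappa> = {..<card (fib i j X \<kappa>)}"
proof (intro equalityI subsetI)
  fix t assume "t \<in> (\<lambda>v. v j) ` fib i j (cmpr S d i j X) \<kappa>"
  then show "t \<in> {..<card (fib i j X \<kappa>)}" by (auto simp: fib_def cmpr_def)
next
  fix t assume t: "t \<in> {..<card (fib i j X \<kappa>)}"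
  then have "fib i j X \<kappa> \<noteq> {}" by auto
  then obtain x where x: "x \<in> fib i j X \<kappa>" by auto
  have xk: "key i j x = \<kappa>" "x \<in> mons S d" using x assms by (auto simp: fib_def)
  have "t \<le> d - (\<Sum>k\<in>S. key i j x k)" using fib_card_bound[OF assms x] t xk by simp
  note w = fib_fill[OF xk(2) this]
  let ?w = "(key i j x)(i := d - (\<Sum>k\<in>S. key i j x k) - t, j := t)"
  have "?w \<in> fib i j (cmpr S d i j X) \<kappa>" using w xk t by (auto simp: fib_def cmpr_def)
  then show "t \<in> (\<lambda>v. v j) ` fib i j (cmpr S d i j X) \<kappa>" using w(3) by (metis image_eqI)
qed

lemma card_fib_comp:
  assumes "X \<subseteq> mons S d"
  shows "card (fib i j (cmpr S d i j X) \<kappa>) = card (fib i j X \<kappa>)"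
proof -
  have "card (fib i j (cmpr S d i j X) \<kappa>) = card ((\<lambda>v. v j) ` fib i j (cmpr S d i j X) \<kappa>)"
    using card_image[OF inj_fib[OF comp_sub]] by simp
  then show ?thesis using fib_comp[OF assms] by simp
qed

lemma card_comp:
  assumes "X \<subseteq> mons S d"
  shows "card (cmpr S d i j X) = card X"
proof -
  have fX: "finite X" using assms mons_finite[OF finS] finite_subset by blast
  have fC: "finite (cmpr S d i j X)" using comp_sub mons_finite[OF finS] finite_subset by blast
  have "card (cmpr S d i j X) \<le> card X"
    by (rule card_le_fibers[where f = "key i j", OF fC fX]) (use card_fib_comp[OF assms] in \<open>simp add: fib_def\<close>)
  moreover have "card X \<le> card (cmpr S d i j X)"
    by (rule card_le_fibers[where f = "key i j", OF fX fC]) (use card_fib_comp[OF assms] in \<open>simp add: fib_def\<close>)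
  ultimately show ?thesis by simp
qed


lemma fib_finite: "X \<subseteq> mons S e \<Longrightarrow> finite (fib i j X \<kappa>)"
proof -
  assume a: "X \<subseteq> mons S e"
  have "fib i j X \<kappa> \<subseteq> mons S e" using a by (auto simp: fib_def)
  then show ?thesis using mons_finite[OF finS] finite_subset by blast
qed

lemma fib_MS_ge:
  assumes "X \<subseteq> mons S d" "fib i j X \<kappa> \<noteq> {}"
  shows "Suc (card (fib i j X \<kappa>)) \<le> card (fib i j (MS S X) \<kappa>)"
proof -
  let ?F = "fib i j X \<kappa>"
  have fF: "finite ?F" by (rule fib_finite[OF assms(1)])
  let ?T = "(\<lambda>v. v j) ` ?F"
  have "Max ?T \<in> ?T" using fF assms(2) by (intro Max_in) auto
  then obtain u0 where u0: "u0 \<in> ?F" "u0 j = Max ?T" by auto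
  have max: "u j \<le> u0 j" if "u \<in> ?F" for u using u0(2) fF that by simp
  have sub: "insert (xmul j u0) (xmul i ` ?F) \<subseteq> fib i j (MS S X) \<kappa>"
    using u0(1) iS jS unfolding fib_def MS_def by (auto simp: key_xmul_i key_xmul_j)
  have notin: "xmul j u0 \<notin> xmul i ` ?F"
  proof
    assume "xmul j u0 \<in> xmul i ` ?F"
    then obtain u where u: "u \<in> ?F" "xmul j u0 = xmul i u" by auto
    then have "xmul j u0 j = xmul i u j" by simp
    then have "Suc (u0 j) = u j" using ij by (simp add: xmul_apply)
    then show False using max[OF u(1)] by simp
  qed
  have MSf: "MS S X \<subseteq> mons S (Suc d)" by (rule MS_mons[OF finS assms(1)])
  have fin: "finite (fib i j (MS S X) \<kappa>)" by (rule fib_finite[OF MSf])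
  have "card (insert (xmul j u0) (xmul i ` ?F)) = Suc (card ?F)"
    using notin fF card_image[OF inj_on_subset[OF inj_xmul, of ?F]] by simp
  then show ?thesis using card_mono[OF fin sub] by simp
qed

lemma card_MS_comp:
  assumes "X \<subseteq> mons S d"
  shows "card (MS S (cmpr S d i j X)) \<le> card (MS S X)"
proof -
  let ?Y = "cmpr S d i j X"
  have fX: "finite X" using assms mons_finite[OF finS] finite_subset by blast
  have fY: "finite ?Y" using comp_sub mons_finite[OF finS] finite_subset by blast
  have MSY: "MS S ?Y \<subseteq> mons S (Suc d)" by (rule MS_mons[OF finS comp_sub])
  have MSX: "MS S X \<subseteq> mons S (Suc d)" by (rule MS_mons[OF finS assms])
  show ?thesis
  proof (rule card_le_fibers[where f = "key i j"])
    show "finite (MS S ?Y)" "finite (MS S X)" using MS_finite finS fX fY by auto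
  next
    fix \<kappa>'
    show "card {a \<in> MS S ?Y. key i j a = \<kappa>'} \<le> card {b \<in> MS S X. key i j b = \<kappa>'}"
    proof (cases "fib i j (MS S ?Y) \<kappa>' = {}")
      case True
      then have "{a \<in> MS S ?Y. key i j a = \<kappa>'} = {}" by (simp add: fib_def)
      then have "card {a \<in> MS S ?Y. key i j a = \<kappa>'} = 0" by (metis card.empty)
      then show ?thesis by linarith
    next
      case False
      let ?F = "fib i j (MS S ?Y) \<kappa>'"
      let ?J = "(\<lambda>v. v j) ` ?F"
      have fF: "finite ?F" by (rule fib_finite[OF MSY])
      have cardF: "card ?F = card ?J" using card_image[OF inj_fib[OF MSY]] by simp
      have "Max ?J \<in> ?J" using fF False by (intro Max_in) auto
      then obtain w0 where w0: "w0 \<in> ?F" "w0 j = Max ?J" by auto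
      have "?J \<subseteq> {..w0 j}" using w0(2) fF by auto
      then have "card ?J \<le> Suc (w0 j)" using card_mono[of "{..w0 j}" ?J] by simp
      moreover have "Suc (w0 j) \<le> card (fib i j (MS S X) \<kappa>')"
      proof -
        from w0(1) obtain l y where l: "l \<in> S" "y \<in> ?Y" "w0 = xmul l y" and kw: "key i j w0 = \<kappa>'"
          by (auto simp: fib_def MS_def)
        have y: "y \<in> mons S d" "y j < card (fib i j X (key i j y))" using l(2) by (auto simp: cmpr_def)
        consider "l = i" | "l = j" | "l \<noteq> i \<and> l \<noteq> j" by blast
        then show ?thesis
        proof cases
          case 1
          then have k: "key i j y = \<kappa>'" and wj: "w0 j = y j" using kw l ij by (auto simp: key_xmul_i xmul_apply)
          then have ne: "fib i j X \<kappa>' \<noteq> {}" using y(2) by (metis card.empty not_less0)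
          show ?thesis using fib_MS_ge[OF assms ne] y(2) k wj by simp
        next
          case 2
          then have k: "key i j y = \<kappa>'" and wj: "w0 j = Suc (y j)" using kw l ij by (auto simp: key_xmul_j xmul_apply)
          then have ne: "fib i j X \<kappa>' \<noteq> {}" using y(2) by (metis card.empty not_less0)
          show ?thesis using fib_MS_ge[OF assms ne] y(2) k wj by simp
        next
          case 3
          then have k: "xmul l (key i j y) = \<kappa>'" and wj: "w0 j = y j"
            using kw l ij by (auto simp: key_xmul_l xmul_apply)
          have sub: "xmul l ` fib i j X (key i j y) \<subseteq> fib i j (MS S X) \<kappa>'"
            using l(1) k 3 unfolding fib_def MS_def by (auto simp: key_xmul_l)
          have "card (fib i j X (key i j y)) = card (xmul l ` fib i j X (key i j y))"
            using card_image[OF inj_on_subset[OF inj_xmul]] by simp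
          also have "\<dots> \<le> card (fib i j (MS S X) \<kappa>')" by (rule card_mono[OF fib_finite[OF MSX] sub])
          finally show ?thesis using y(2) wj by simp
        qed
      qed
      ultimately show ?thesis using cardF by (simp add: fib_def)
    qed
  qed
qed

lemma sum_xmul: "l \<in> S \<Longrightarrow> (\<Sum>k\<in>S. xmul l w k) = Suc (\<Sum>k\<in>S. w k)"
  using finS by (simp add: xmul_alt sum_shift sum_pw)

lemma comp_fixed_stable:
  assumes "cmpr S d i j X = X" "xmul j w \<in> X"
  shows "xmul i w \<in> X"
proof -
  let ?v = "xmul j w"
  have v: "?v \<in> mons S d" "?v j < card (fib i j X (key i j ?v))"
    using assms by (auto simp: cmpr_def)
  have supp: "k \<in> S" if "w k \<noteq> 0" for k
  proof -
    have "xmul j w k \<noteq> 0" using that by (simp add: xmul_apply)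
    then show ?thesis using v(1) by (auto simp: mons_def)
  qed
  have "(\<Sum>k\<in>S. xmul i w k) = (\<Sum>k\<in>S. ?v k)" using sum_xmul[OF iS] sum_xmul[OF jS] by simp
  then have "xmul i w \<in> mons S d" using v(1) supp iS unfolding mons_def xmul_apply by auto
  moreover have "key i j (xmul i w) = key i j ?v" by (simp add: key_xmul_i key_xmul_j)
  moreover have "xmul i w j < ?v j" using ij by (simp add: xmul_apply)
  ultimately have "xmul i w \<in> cmpr S d i j X" using v(2) by (auto simp: cmpr_def)
  then show ?thesis using assms(1) by simp
qed


end

lemma sum_lower:
  "finite (T::nat set) \<Longrightarrow> (\<Sum>t<card T. t) \<le> \<Sum>T \<and> (T \<noteq> {..<card T} \<longrightarrow> (\<Sum>t<card T. t) < \<Sum>T)"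
proof (induction "card T" arbitrary: T)
  case 0 then show ?case by simp
next
  case (Suc n)
  then have ne: "T \<noteq> {}" by auto
  let ?M = "Max T"
  let ?T' = "T - {?M}"
  have M: "?M \<in> T" using Max_in[OF Suc.prems ne] .
  have cT': "card ?T' = n" using Suc.hyps M Suc.prems by simp
  have fT': "finite ?T'" using Suc.prems by simp
  have IH: "(\<Sum>t<n. t) \<le> \<Sum>?T' \<and> (?T' \<noteq> {..<n} \<longrightarrow> (\<Sum>t<n. t) < \<Sum>?T')"
    using Suc.hyps(1)[of ?T'] cT' fT' by simp
  have sT: "\<Sum>T = ?M + \<Sum>?T'" using Suc.prems M by (simp add: sum.remove)
  have "T \<subseteq> {..?M}" using Suc.prems by auto
  then have "card T \<le> Suc ?M" using card_mono[of "{..?M}" T] by simp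
  then have nM: "n \<le> ?M" using Suc.hyps by simp
  have s: "(\<Sum>t<card T. t) = (\<Sum>t<n. t) + n" using Suc.hyps(2)[symmetric] by simp
  show ?case
  proof (intro conjI impI)
    show "(\<Sum>t<card T. t) \<le> \<Sum>T" using IH sT s nM by simp
  next
    assume ne2: "T \<noteq> {..<card T}"
    show "(\<Sum>t<card T. t) < \<Sum>T"
    proof (cases "n < ?M")
      case True then show ?thesis using IH sT s by simp
    next
      case False
      then have Mn: "?M = n" using nM by simp
      have "?T' \<noteq> {..<n}"
      proof
        assume "?T' = {..<n}"
        then have "T = insert n {..<n}" using M Mn by blast
        then have "T = {..<Suc n}" by auto
        then show False using ne2 Suc.hyps by simp
      qed
      then show ?thesis using IH sT s Mn by simp
    qed
  qed
qed

lemma pot_comp: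
  assumes finS: "finite S" and iS: "i \<in> S" and jS: "j \<in> S" and ij: "i \<noteq> j"
    and X: "X \<subseteq> mons S d"
  shows "(\<Sum>v\<in>cmpr S d i j X. v j) \<le> (\<Sum>v\<in>X. v j)"
    "cmpr S d i j X \<noteq> X \<Longrightarrow> (\<Sum>v\<in>cmpr S d i j X. v j) < (\<Sum>v\<in>X. v j)"
proof -
  let ?Y = "cmpr S d i j X"
  have Ysub: "?Y \<subseteq> mons S d" by (rule comp_sub[OF finS iS jS ij])
  have fX: "finite X" using X mons_finite[OF finS] finite_subset by blast
  have fY: "finite ?Y" using Ysub mons_finite[OF finS] finite_subset by blast
  let ?K = "key i j ` (X \<union> ?Y)"
  have fK: "finite ?K" using fX fY by simp
  have gX: "(\<Sum>v\<in>X. v j) = (\<Sum>\<kappa>\<in>?K. \<Sum>v\<in>fib i j X \<kappa>. v j)"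
    unfolding fib_def by (rule sum.group[symmetric]) (use fX fK in auto)
  have gY: "(\<Sum>v\<in>?Y. v j) = (\<Sum>\<kappa>\<in>?K. \<Sum>v\<in>fib i j ?Y \<kappa>. v j)"
    unfolding fib_def by (rule sum.group[symmetric]) (use fY fK in auto)
  have perY: "(\<Sum>v\<in>fib i j ?Y \<kappa>. v j) = (\<Sum>t<card (fib i j X \<kappa>). t)" for \<kappa>
  proof -
    have "(\<Sum>v\<in>fib i j ?Y \<kappa>. v j) = (\<Sum>t\<in>(\<lambda>v. v j) ` fib i j ?Y \<kappa>. t)"
      using sum.reindex[OF inj_fib[OF finS iS jS ij Ysub], of "\<lambda>t. t"] by simp
    then show ?thesis using fib_comp[OF finS iS jS ij X] by simp
  qed
  have perX: "(\<Sum>v\<in>fib i j X \<kappa>. v j) = (\<Sum>t\<in>(\<lambda>v. v j) ` fib i j X \<kappa>. t)"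
    and cX: "card ((\<lambda>v. v j) ` fib i j X \<kappa>) = card (fib i j X \<kappa>)" for \<kappa>
    using sum.reindex[OF inj_fib[OF finS iS jS ij X], of "\<lambda>t. t"] card_image[OF inj_fib[OF finS iS jS ij X]]
    by simp_all
  have finT: "finite ((\<lambda>v. v j) ` fib i j X \<kappa>)" for \<kappa>
    using fib_finite[OF finS iS jS ij X] by simp
  have le: "(\<Sum>v\<in>fib i j ?Y \<kappa>. v j) \<le> (\<Sum>v\<in>fib i j X \<kappa>. v j)" for \<kappa>
    using sum_lower[OF finT[of \<kappa>]] perY perX cX by simp
  show "(\<Sum>v\<in>?Y. v j) \<le> (\<Sum>v\<in>X. v j)" unfolding gX gY by (rule sum_mono) (rule le)
  assume ne: "?Y \<noteq> X"
  have "\<not> X \<subseteq> ?Y"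
  proof
    assume "X \<subseteq> ?Y"
    then have "X = ?Y" using card_subset_eq[OF fY] card_comp[OF finS iS jS ij X] by simp
    then show False using ne by simp
  qed
  then obtain v where v: "v \<in> X" "v \<notin> ?Y" by auto
  have vj: "\<not> v j < card (fib i j X (key i j v))" using v X by (auto simp: cmpr_def)
  let ?k0 = "key i j v"
  have "(\<lambda>v. v j) ` fib i j X ?k0 \<noteq> {..<card (fib i j X ?k0)}"
  proof
    assume eq: "(\<lambda>v. v j) ` fib i j X ?k0 = {..<card (fib i j X ?k0)}"
    have "v j \<in> (\<lambda>v. v j) ` fib i j X ?k0" using v by (auto simp: fib_def)
    then show False using eq vj by simp
  qed
  then have "(\<Sum>v\<in>fib i j ?Y ?k0. v j) < (\<Sum>v\<in>fib i j X ?k0. v j)"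
    using sum_lower[OF finT[of ?k0]] perY perX cX by simp
  moreover have "?k0 \<in> ?K" using v by simp
  ultimately show "(\<Sum>v\<in>?Y. v j) < (\<Sum>v\<in>X. v j)" unfolding gX gY
    using le by (intro sum_strict_mono_ex1[OF fK]) auto
qed

definition stable :: "nat set \<Rightarrow> nat \<Rightarrow> (nat \<Rightarrow> nat) set \<Rightarrow> bool" where
  "stable S j X \<longleftrightarrow> (\<forall>w. xmul j w \<in> X \<longrightarrow> (\<forall>i\<in>S. xmul i w \<in> X))"

lemma stable_exists:
  assumes finS: "finite S" and jS: "j \<in> S" and V: "V \<subseteq> mons S d"
  shows "\<exists>X. X \<subseteq> mons S d \<and> card X = card V \<and> card (MS S X) \<le> card (MS S V) \<and> stable S j X"
proof -
  let ?P = "\<lambda>X. X \<subseteq> mons S d \<and> card X = card V \<and> card (MS S X) \<le> card (MS S V)"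
  let ?m = "\<lambda>X. \<Sum>v\<in>X. v j"
  obtain X where X: "?P X" and min: "\<And>Y. ?P Y \<Longrightarrow> ?m X \<le> ?m Y"
    using ex_has_least_nat[of ?P V ?m] V by auto
  have "stable S j X" unfolding stable_def
  proof (intro allI impI ballI)
    fix w i assume w: "xmul j w \<in> X" and iS: "i \<in> S"
    show "xmul i w \<in> X"
    proof (cases "i = j")
      case True then show ?thesis using w by simp
    next
      case False
      let ?Y = "cmpr S d i j X"
      have "card ?Y = card V" using card_comp[OF finS iS jS False] X by simp
      moreover have "card (MS S ?Y) \<le> card (MS S V)"
        using card_MS_comp[OF finS iS jS False, of X d] X by simp
      ultimately have "?P ?Y" using comp_sub[OF finS iS jS False] by simp
      then have "?m X \<le> ?m ?Y" by (rule min)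
      then have "?Y = X" using pot_comp(2)[OF finS iS jS False] X by (meson leD)
      then show ?thesis using comp_fixed_stable[OF finS iS jS False _ w] by simp
    qed
  qed
  then show ?thesis using X by blast
qed


lemma mons_xmul_D:
  assumes "finite S" "j \<in> S" "xmul j w \<in> mons S d"
  shows "w \<in> mons S (d - 1)" "d \<ge> 1"
proof -
  have supp: "k \<in> S" if "w k \<noteq> 0" for k
  proof -
    have "xmul j w k \<noteq> 0" using that by (simp add: xmul_apply)
    then show ?thesis using assms(3) by (auto simp: mons_def)
  qed
  have "(\<Sum>k\<in>S. xmul j w k) = Suc (\<Sum>k\<in>S. w k)"
    using assms(1,2) by (simp add: xmul_alt sum_shift sum_pw)
  then have "Suc (\<Sum>k\<in>S. w k) = d" using assms(3) by (simp add: mons_def)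
  then show "w \<in> mons S (d - 1)" "d \<ge> 1" using supp by (auto simp: mons_def)
qed

lemma macaulay_aux:
  "\<forall>S d V. finite S \<longrightarrow> card S = Suc n \<longrightarrow> V \<subseteq> mons S d \<longrightarrow> U n (card V) \<le> card (MS S V)"
proof (induction n)
  case 0
  show ?case
  proof (intro allI impI)
    fix S d V assume S: "finite S" "card S = Suc 0" and V: "V \<subseteq> mons S d"
    obtain j where Sj: "S = {j}" using S card_1_singletonE[of S] by (metis One_nat_def)
    have "MS S V = xmul j ` V" unfolding MS_def Sj by auto
    then have "card (MS S V) = card V" using card_image[OF inj_on_subset[OF inj_xmul]] by simp
    then show "U 0 (card V) \<le> card (MS S V)" by simp
  qed
next
  case (Suc n)
  show ?case
  proof (intro allI impI)
    fix S d V assume finS: "finite S" and cS: "card S = Suc (Suc n)" and V0: "V \<subseteq> mons S d"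
    obtain j where jS: "j \<in> S" using cS by (metis card.empty ex_in_conv nat.distinct(1))
    let ?S' = "S - {j}"
    have cS': "card ?S' = Suc n" using cS jS finS by simp
    have finS': "finite ?S'" using finS by simp
    note IHo = Suc.IH
    have "\<forall>V. V \<subseteq> mons S d \<longrightarrow> U (Suc n) (card V) \<le> card (MS S V)"
    proof (induction d)
      case 0
      show ?case
      proof (intro allI impI)
        fix V assume V: "V \<subseteq> mons S 0"
        have "mons S 0 = {\<lambda>_. 0}" using finS by (auto simp: mons_def fun_eq_iff)
        then have "V = {} \<or> V = {\<lambda>_. 0}" using V subset_singletonD by metis
        then show "U (Suc n) (card V) \<le> card (MS S V)"
        proof
          assume "V = {}" then show ?thesis by simp
        next
          assume V1: "V = {\<lambda>_. 0}"
          have "MS S V = (\<lambda>i. xmul i (\<lambda>_. 0)) ` S" unfolding MS_def V1 by auto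
          moreover have "inj_on (\<lambda>i. xmul i (\<lambda>_. 0)) S"
            by (rule inj_onI) (metis xmul_apply Zero_not_Suc)
          ultimately have "card (MS S V) = Suc (Suc n)" using card_image cS by metis
          moreover have "U (Suc n) 1 = Suc (Suc n)" using U_single[of n 0] by simp
          ultimately show ?thesis using V1 by simp
        qed
      qed
    next
      case (Suc d)
      show ?case
      proof (intro allI impI)
        fix V assume V: "V \<subseteq> mons S (Suc d)"
        obtain X where X: "X \<subseteq> mons S (Suc d)" "card X = card V" "card (MS S X) \<le> card (MS S V)"
          and st: "stable S j X" using stable_exists[OF finS jS V] by blast
        have finX: "finite X" using X(1) mons_finite[OF finS] finite_subset by blast
        define V' where "V' = {v \<in> X. v j = 0}"
        define W where "W = {w. xmul j w \<in> X}"
        have XW: "X = V' \<union> xmul j ` W"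
        proof (intro equalityI subsetI)
          fix v assume v: "v \<in> X"
          show "v \<in> V' \<union> xmul j ` W"
          proof (cases "v j = 0")
            case True then show ?thesis using v by (simp add: V'_def)
          next
            case False
            then have "v = xmul j (v(j := v j - 1))" by (auto simp: xmul_def fun_eq_iff)
            then show ?thesis using v unfolding W_def by (metis (mono_tags, lifting) UnI2 image_eqI mem_Collect_eq)
          qed
        next
          fix v assume "v \<in> V' \<union> xmul j ` W"
          then show "v \<in> X" by (auto simp: V'_def W_def)
        qed
        have disj: "V' \<inter> xmul j ` W = {}" by (auto simp: V'_def xmul_apply)
        have finW: "finite W"
        proof -
          have "xmul j ` W \<subseteq> X" by (auto simp: W_def)
          then have "finite (xmul j ` W)" using finX finite_subset by blast
          then show ?thesis using finite_imageD inj_on_subset[OF inj_xmul] by blast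
        qed
        have finV': "finite V'" using finX by (simp add: V'_def)
        have cX: "card X = card V' + card W"
        proof -
          have "card X = card V' + card (xmul j ` W)"
            unfolding XW by (rule card_Un_disjoint[OF finV' _ disj]) (use finW in simp)
          moreover have "card (xmul j ` W) = card W" by (rule card_image[OF inj_on_subset[OF inj_xmul]]) simp
          ultimately show ?thesis by simp
        qed
        have V'sub: "V' \<subseteq> mons ?S' (Suc d)"
        proof
          fix v assume v: "v \<in> V'"
          then have vm: "v \<in> mons S (Suc d)" "v j = 0" using X(1) by (auto simp: V'_def)
          have "(\<Sum>k\<in>S. v k) = v j + (\<Sum>k\<in>?S'. v k)" using finS jS by (simp add: sum.remove)
          then show "v \<in> mons ?S' (Suc d)" using vm by (auto simp: mons_def)
        qed
        have Wsub: "W \<subseteq> mons S d"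
          using mons_xmul_D[OF finS jS] X(1) by (force simp: W_def)
        have MSW: "MS S W \<subseteq> X" using st unfolding stable_def MS_def W_def by auto
        have "U (Suc n) (card W) \<le> card (MS S W)" using Suc.IH Wsub by blast
        also have "\<dots> \<le> card X" by (rule card_mono[OF finX MSW])
        finally have UW: "U (Suc n) (card W) \<le> card X" .
        have IHn: "U n (card V') \<le> card (MS ?S' V')" by (rule IHo[rule_format, OF finS' cS' V'sub])
        have sub2: "xmul j ` X \<union> MS ?S' V' \<subseteq> MS S X"
          using jS unfolding MS_def V'_def by auto
        have disj2: "xmul j ` X \<inter> MS ?S' V' = {}"
          unfolding MS_def V'_def by (auto simp: xmul_apply dest!: fun_cong[where x = j])
        have finMSX: "finite (MS S X)" using MS_finite[OF finS finX] .
        have finMS': "finite (MS ?S' V')" using MS_finite[OF finS' finV'] .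
        have "card X + card (MS ?S' V') \<le> card (MS S X)"
        proof -
          have "card (xmul j ` X \<union> MS ?S' V') = card X + card (MS ?S' V')"
            using card_Un_disjoint[OF _ finMS' disj2] finX card_image[OF inj_on_subset[OF inj_xmul]] by simp
          then show ?thesis using card_mono[OF finMSX sub2] by simp
        qed
        moreover have "U (Suc n) (card X) \<le> card X + U n (card X - card W)" by (rule F3[OF UW])
        moreover have "card X - card W = card V'" using cX by simp
        ultimately have "U (Suc n) (card X) \<le> card (MS S X)" using IHn by simp
        then show "U (Suc n) (card V) \<le> card (MS S V)" using X by simp
      qed
    qed
    then show "U (Suc n) (card V) \<le> card (MS S V)" using V0 by blast
  qed
qed

theorem macaulay:
  assumes "finite S" "S \<noteq> {}" "V \<subseteq> mons S d"
  shows "U (card S - 1) (card V) \<le> card (MS S V)"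
proof -
  obtain n where "card S = Suc n" using assms by (metis card_0_eq not0_implies_Suc)
  then show ?thesis using macaulay_aux[of n] assms by simp
qed

lemma pw_mons: "finite S \<Longrightarrow> j \<in> S \<Longrightarrow> pw j p \<in> mons S p"
  by (auto simp: mons_def pw_def)

lemma shift_pw_pw: "shift (pw j a) (pw j b) = pw j (b + a)"
  by (auto simp: shift_def pw_def fun_eq_iff)

lemma extremal:
  "\<forall>S j h p. finite S \<longrightarrow> card S = Suc k \<longrightarrow> j \<in> S \<longrightarrow> h \<le> ((p + k) choose k) \<longrightarrow>
     (\<exists>E. E \<subseteq> mons S p \<and> card E = h \<and> card (MS S E) \<le> U k h \<and> (h \<ge> 1 \<longrightarrow> pw j p \<in> E))"
proof (induction k)
  case 0
  show ?case
  proof (intro allI impI)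
    fix S :: "nat set" and j h p :: nat assume S: "finite S" "card S = Suc 0" "j \<in> S" and h: "h \<le> ((p + 0) choose 0)"
    have Sj: "S = {j}" using S by (metis card_1_singletonE One_nat_def singletonD)
    show "\<exists>E. E \<subseteq> mons S p \<and> card E = h \<and> card (MS S E) \<le> U 0 h \<and> (h \<ge> 1 \<longrightarrow> pw j p \<in> E)"
    proof (cases "h = 0")
      case True then show ?thesis by (intro exI[of _ "{}"]) (simp add: MS_def)
    next
      case False
      then have h1: "h = 1" using h by simp
      have "MS S {pw j p} = {xmul j (pw j p)}" unfolding MS_def Sj by auto
      then show ?thesis using h1 pw_mons[OF S(1) S(3)] by (intro exI[of _ "{pw j p}"]) simp
    qed
  qed
next
  case (Suc k)
  note IHo = Suc.IH
  show ?case
  proof (intro allI impI)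
    fix S :: "nat set" and j h p :: nat assume finS: "finite S" and cS: "card S = Suc (Suc k)" and jS: "j \<in> S"
      and hp: "h \<le> ((p + Suc k) choose (Suc k))"
    show "\<exists>E. E \<subseteq> mons S p \<and> card E = h \<and> card (MS S E) \<le> U (Suc k) h \<and> (h \<ge> 1 \<longrightarrow> pw j p \<in> E)"
    proof (cases "h = 0")
      case True then show ?thesis by (intro exI[of _ "{}"]) (simp add: MS_def)
    next
      case False
      obtain a s where hs: "h = ((a + Suc k) choose (Suc k)) + s" and s: "s < ((a + Suc k) choose k)"
        using decomp[of h k] False by auto
      have ap: "a \<le> p"
      proof (rule ccontr)
        assume "\<not> a \<le> p"
        then have "((p + Suc k) choose (Suc k)) < ((a + Suc k) choose (Suc k))"
          by (intro choose_strict_mono) auto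
        then show False using hp hs by simp
      qed
      let ?S' = "S - {j}"
      have cS': "card ?S' = Suc k" using cS jS finS by simp
      have finS': "finite ?S'" using finS by simp
      obtain B where B: "B \<subseteq> mons ?S' (Suc a)" "card B = s" "card (MS ?S' B) \<le> U k s"
        and Bp: "B \<noteq> {} \<Longrightarrow> a < p"
      proof (cases "s = 0")
        case True then show ?thesis by (intro that[of "{}"]) (auto simp: MS_def)
      next
        case False
        obtain j' where j': "j' \<in> ?S'" using cS' by (metis card.empty ex_in_conv nat.distinct(1))
        have "s \<le> ((Suc a + k) choose k)" using s by simp
        then obtain B where "B \<subseteq> mons ?S' (Suc a)" "card B = s" "card (MS ?S' B) \<le> U k s"
          using IHo[rule_format, OF finS' cS' j'] by blast
        moreover have "a < p"
        proof (rule ccontr)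
          assume "\<not> a < p"
          then have "a = p" using ap by simp
          then show False using hs hp False by simp
        qed
        ultimately show ?thesis by (intro that) auto
      qed
      define c1 where "c1 = pw j (p - a)"
      define c2 where "c2 = pw j (p - Suc a)"
      define E1 where "E1 = shift c1 ` mons S a"
      define E2 where "E2 = shift c2 ` B"
      have E1sub: "E1 \<subseteq> mons S p"
        using shift_pw_mons[OF finS _ jS, of _ a "p - a"] ap unfolding E1_def c1_def by auto
      have Bsub: "B \<subseteq> mons S (Suc a)" using B(1) mons_mono_set[OF finS, of ?S'] by blast
      have E2sub: "E2 \<subseteq> mons S p"
      proof
        fix e assume "e \<in> E2"
        then obtain b where b: "b \<in> B" "e = shift c2 b" unfolding E2_def by auto
        have "a < p" using Bp b(1) by blast
        then show "e \<in> mons S p" using shift_pw_mons[OF finS _ jS, of b "Suc a" "p - Suc a"] Bsub b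
          unfolding c2_def by auto
      qed
      have Bj: "b j = 0" if "b \<in> B" for b using B(1) that by (auto simp: mons_def)
      have disj: "E1 \<inter> E2 = {}"
      proof -
        have "e j \<ge> p - a" if "e \<in> E1" for e using that unfolding E1_def c1_def by (auto simp: shift_def pw_def)
        moreover have "e j = p - Suc a" if "e \<in> E2" for e using that Bj unfolding E2_def c2_def by (auto simp: shift_def pw_def)
        moreover have "p - Suc a < p - a" if "E2 \<noteq> {}" using Bp that ap unfolding E2_def by auto
        ultimately show ?thesis by fastforce
      qed
      have finB: "finite B" using B(1) mons_finite[OF finS'] finite_subset by blast
      have cE1: "card E1 = ((a + Suc k) choose (Suc k))"
        using card_image[OF inj_on_subset[OF shift_inj]] card_mons[OF finS cS] unfolding E1_def by simp
      have cE2: "card E2 = s" using card_image[OF inj_on_subset[OF shift_inj]] B(2) unfolding E2_def by simp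
      have finE1: "finite E1" unfolding E1_def using mons_finite[OF finS] by simp
      have finE2: "finite E2" unfolding E2_def using finB by simp
      have cE: "card (E1 \<union> E2) = h" using card_Un_disjoint[OF finE1 finE2 disj] cE1 cE2 hs by simp
      have pwE: "pw j p \<in> E1"
      proof -
        have "shift c1 (pw j a) = pw j p" unfolding c1_def using shift_pw_pw[of j "p - a" a] ap by simp
        then show ?thesis unfolding E1_def using pw_mons[OF finS jS] by (metis image_eqI)
      qed
      have MSsub: "MS S (E1 \<union> E2) \<subseteq> shift c1 ` mons S (Suc a) \<union> shift c2 ` MS ?S' B"
      proof
        fix w assume "w \<in> MS S (E1 \<union> E2)"
        then obtain l e where le: "l \<in> S" "e \<in> E1 \<union> E2" "w = xmul l e" unfolding MS_def by auto
        show "w \<in> shift c1 ` mons S (Suc a) \<union> shift c2 ` MS ?S' B"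
        proof (cases "e \<in> E1")
          case True
          then obtain v where v: "v \<in> mons S a" "e = shift c1 v" unfolding E1_def by auto
          then have "w = shift c1 (xmul l v)" using le by (simp add: xmul_shift)
          moreover have "xmul l v \<in> mons S (Suc a)" by (rule xmul_mons[OF finS v(1) le(1)])
          ultimately show ?thesis by blast
        next
          case False
          then have "e \<in> E2" using le by simp
          then obtain b where b: "b \<in> B" "e = shift c2 b" unfolding E2_def by auto
          have ap': "a < p" using Bp b(1) by blast
          show ?thesis
          proof (cases "l = j")
            case True
            have "w = shift c1 b" using le b True ap' unfolding c1_def c2_def
              by (auto simp: xmul_def shift_def pw_def fun_eq_iff)
            then show ?thesis using Bsub b(1) by blast
          next
            case False
            then have "w = shift c2 (xmul l b)" using le b by (simp add: xmul_shift)
            moreover have "xmul l b \<in> MS ?S' B" using False le(1) b(1) unfolding MS_def by blast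
            ultimately show ?thesis by blast
          qed
        qed
      qed
      have "card (MS S (E1 \<union> E2)) \<le> card (shift c1 ` mons S (Suc a) \<union> shift c2 ` MS ?S' B)"
        by (rule card_mono[OF _ MSsub]) (use mons_finite[OF finS] MS_finite[OF finS' finB] in simp)
      also have "\<dots> \<le> card (shift c1 ` mons S (Suc a)) + card (shift c2 ` MS ?S' B)" by (rule card_Un_le)
      also have "\<dots> = ((Suc a + Suc k) choose (Suc k)) + card (MS ?S' B)"
        using card_image[OF inj_on_subset[OF shift_inj]] card_mons[OF finS cS] by simp
      also have "\<dots> \<le> ((Suc a + Suc k) choose (Suc k)) + U k s" using B(3) by simp
      also have "\<dots> = U (Suc k) h" using U_block[OF s] hs by simp
      finally have "card (MS S (E1 \<union> E2)) \<le> U (Suc k) h" .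
      then show ?thesis using E1sub E2sub cE pwE by (intro exI[of _ "E1 \<union> E2"]) auto
    qed
  qed
qed


lemma SS:
  assumes x: "x \<ge> 1" and y: "y \<ge> 1"
  shows "U (Suc k) (x + y) < U (Suc k) x + U (Suc k) y"
proof -
  define S where "S = {0..Suc (Suc k)} - {0}"
  have finS: "finite S" by (simp add: S_def)
  have cS: "card S = Suc (Suc k)" by (simp add: S_def)
  have 1: "1 \<in> S" and 2: "2 \<in> S" by (auto simp: S_def)
  define p where "p = x + y"
  have big: "Suc p \<le> ((p + Suc k) choose (Suc k))" by (rule choose_ge_Suc)
  obtain Ex where Ex: "Ex \<subseteq> mons S p" "card Ex = x" "card (MS S Ex) \<le> U (Suc k) x" "pw 1 p \<in> Ex"
    using extremal[of "Suc k", rule_format, OF finS cS 1, of x p] big x unfolding p_def by auto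
  obtain Ey where Ey: "Ey \<subseteq> mons S p" "card Ey = y" "card (MS S Ey) \<le> U (Suc k) y" "pw 2 p \<in> Ey"
    using extremal[of "Suc k", rule_format, OF finS cS 2, of y p] big y unfolding p_def by auto
  define A where "A = shift (pw 2 (Suc p)) ` Ex"
  define B where "B = shift (pw 1 (Suc p)) ` Ey"
  have finEx: "finite Ex" "finite Ey" using Ex(1) Ey(1) mons_finite[OF finS] finite_subset by blast+
  have Asub: "A \<subseteq> mons S (p + Suc p)" using Ex(1) shift_pw_mons[OF finS _ 2] unfolding A_def by blast
  have Bsub: "B \<subseteq> mons S (p + Suc p)" using Ey(1) shift_pw_mons[OF finS _ 1] unfolding B_def by blast
  have disj: "A \<inter> B = {}"
  proof (rule ccontr)
    assume "A \<inter> B \<noteq> {}"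
    then obtain v where vA: "v \<in> A" and vB: "v \<in> B" by auto
    have "v 2 \<ge> Suc p" using vA unfolding A_def by (auto simp: shift_def pw_def)
    moreover have "v 1 \<ge> Suc p" using vB unfolding B_def by (auto simp: shift_def pw_def)
    moreover have "(\<Sum>k\<in>{1,2}. v k) \<le> p + Suc p"
      by (rule mons_le[OF finS]) (use vA Asub 1 2 in auto)
    ultimately show False by simp
  qed
  have cA: "card A = x" using Ex(2) card_image[OF inj_on_subset[OF shift_inj]] unfolding A_def by simp
  have cB: "card B = y" using Ey(2) card_image[OF inj_on_subset[OF shift_inj]] unfolding B_def by simp
  have finA: "finite A" "finite B" using finEx unfolding A_def B_def by simp_all
  have cAB: "card (A \<union> B) = x + y" using card_Un_disjoint[OF finA disj] cA cB by simp
  have MSA: "card (MS S A) = card (MS S Ex)"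
    unfolding A_def MS_shift using card_image[OF inj_on_subset[OF shift_inj]] by simp
  have MSB: "card (MS S B) = card (MS S Ey)"
    unfolding B_def MS_shift using card_image[OF inj_on_subset[OF shift_inj]] by simp
  define z where "z = (\<lambda>k::nat. if k = 1 \<or> k = 2 then Suc p else 0)"
  have zA: "z \<in> MS S A"
  proof -
    have "z = xmul 1 (shift (pw 2 (Suc p)) (pw 1 p))" by (auto simp: z_def xmul_def shift_def pw_def fun_eq_iff)
    moreover have "shift (pw 2 (Suc p)) (pw 1 p) \<in> A" using Ex(4) unfolding A_def by blast
    ultimately show ?thesis using 1 unfolding MS_def by blast
  qed
  have zB: "z \<in> MS S B"
  proof -
    have "z = xmul 2 (shift (pw 1 (Suc p)) (pw 2 p))" by (auto simp: z_def xmul_def shift_def pw_def fun_eq_iff)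
    moreover have "shift (pw 1 (Suc p)) (pw 2 p) \<in> B" using Ey(4) unfolding B_def by blast
    ultimately show ?thesis using 2 unfolding MS_def by blast
  qed
  have finMA: "finite (MS S A)" "finite (MS S B)" using MS_finite[OF finS] finA by auto
  have "card (MS S A \<inter> MS S B) \<ge> 1"
  proof -
    have "{z} \<subseteq> MS S A \<inter> MS S B" using zA zB by simp
    then show ?thesis using card_mono[of "MS S A \<inter> MS S B" "{z}"] finMA by simp
  qed
  then have "card (MS S (A \<union> B)) < card (MS S A) + card (MS S B)"
    using card_Un_Int[OF finMA] unfolding MS_Un by simp
  moreover have "U (card S - 1) (card (A \<union> B)) \<le> card (MS S (A \<union> B))"
    by (rule macaulay[OF finS]) (use 1 Asub Bsub in auto)
  ultimately show ?thesis using cS cAB MSA MSB Ex(3) Ey(3) by simp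
qed

theorem lemma2p2:
  fixes n d :: nat and V :: "(nat \<Rightarrow> nat) set"
  assumes "n \<ge> 1"
    and "V \<subseteq> monomials n d"
    and "gotzmann n V"
  shows "\<forall>i\<in>{1..n}. hbar (n - 1) (card V) \<le> card (Dset n d i V)
                   \<and> card (Dset n d i V) \<le> mac_low (n - 1) (card V)"
proof (intro ballI)
  fix i assume iS: "i \<in> {1..n}"
  let ?S = "{1..n}"
  let ?h = "card V"
  have finS: "finite ?S" by simp
  have V: "V \<subseteq> mons ?S d" using assms(2) by (simp add: monomials_eq)
  have finV: "finite V" using V mons_finite[OF finS] finite_subset by blast
  show "hbar (n - 1) ?h \<le> card (Dset n d i V) \<and> card (Dset n d i V) \<le> mac_low (n - 1) ?h"
  proof (cases "?h \<le> 1")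
    case True
    then have D0: "Dset n d i V = {}" by (simp add: Dset_def)
    have "hbar (n - 1) ?h = 0"
    proof (cases "?h = 0")
      case True then show ?thesis by (simp add: hbar_def)
    next
      case False
      then have "?h = 1" using \<open>?h \<le> 1\<close> by simp
      then show ?thesis by (simp add: hbar_def bar_alpha_def)
    qed
    then show ?thesis using D0 by simp
  next
    case False
    then have h2: "?h \<ge> 2" by simp
    have n2: "n \<ge> 2"
    proof (rule ccontr)
      assume "\<not> n \<ge> 2"
      then have n1: "n = 1" using assms(1) by simp
      have "card ?S = Suc 0" using n1 by simp
      then have "card (mons ?S d) = 1" using card_mons[OF finS, of 0 d] by simp
      then have "?h \<le> 1" using card_mono[OF mons_finite[OF finS] V] by simp
      then show False using h2 by simp
    qed
    obtain k0 where k0: "n - 1 = Suc k0" by (rule that[of "n - 2"]) (use n2 in simp)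
    let ?u = "mgcd V"
    have Vne: "V \<noteq> {}" using h2 by auto
    have uv: "?u l \<le> v l" if "v \<in> V" for v l
      unfolding mgcd_def using finV that by simp
    have "?u i \<in> (\<lambda>v. v i) ` V" unfolding mgcd_def using finV Vne by (intro Min_in) auto
    then obtain v0 where v0: "v0 \<in> V" "v0 i = ?u i" by auto
    define D where "D = {v \<in> V. v i = ?u i}"
    define W where "W = {v \<in> V. ?u i < v i}"
    have DD: "Dset n d i V = D"
    proof -
      have "Dset n d i V = V - {v \<in> monomials n d. mdvd (xmul i ?u) v}"
        using h2 by (simp add: Dset_def Kset_def)
      also have "\<dots> = D"
      proof (intro equalityI subsetI)
        fix v assume v: "v \<in> V - {v \<in> monomials n d. mdvd (xmul i ?u) v}"
        then have "\<not> mdvd (xmul i ?u) v" using assms(2) by auto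
        then obtain l where l: "xmul i ?u l > v l" unfolding mdvd_def by (auto simp: not_le)
        have vV: "v \<in> V" using v by simp
        have "l = i"
        proof (rule ccontr)
          assume "l \<noteq> i"
          then have "?u l > v l" using l by (simp add: xmul_apply)
          then show False using uv[OF vV, of l] by simp
        qed
        then have "Suc (?u i) > v i" using l by (simp add: xmul_apply)
        then show "v \<in> D" using uv[OF vV, of i] vV by (auto simp: D_def)
      next
        fix v assume v: "v \<in> D"
        then have "\<not> mdvd (xmul i ?u) v" unfolding mdvd_def D_def by (auto simp: xmul_apply intro!: exI[of _ i])
        then show "v \<in> V - {v \<in> monomials n d. mdvd (xmul i ?u) v}" using v by (auto simp: D_def)
      qed
      finally show ?thesis .
    qed
    have VDW: "V = D \<union> W" "D \<inter> W = {}" using uv by (auto simp: D_def W_def intro: le_neq_implies_less)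
    have finD: "finite D" "finite W" using finV by (auto simp: D_def W_def)
    have cW: "card W = ?h - card D" using card_Un_disjoint[OF finD VDW(2)] VDW(1) by simp
    have "v0 \<in> D" using v0 by (simp add: D_def)
    then have "D \<noteq> {}" by auto
    then have c1: "card D \<ge> 1" using finD(1) by (simp add: Suc_le_eq card_gt_0_iff)
    let ?S' = "?S - {i}"
    have finS': "finite ?S'" by simp
    have cS': "card ?S' = n - 1" using iS by simp
    have S'ne: "?S' \<noteq> {}" using cS' k0 by (metis card.empty nat.distinct(1))
    define \<psi> where "\<psi> = (\<lambda>v::nat \<Rightarrow> nat. v(i := 0))"
    have psiD: "\<psi> ` D \<subseteq> mons ?S' (d - ?u i)"
    proof
      fix w assume "w \<in> \<psi> ` D"
      then obtain v where v: "v \<in> D" "w = \<psi> v" by auto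
      have vm: "v \<in> mons ?S d" using v V by (auto simp: D_def)
      have "(\<Sum>k\<in>?S. v k) = v i + (\<Sum>k\<in>?S'. v k)" using iS by (simp add: sum.remove)
      moreover have "(\<Sum>k\<in>?S'. v k) = (\<Sum>k\<in>?S'. w k)" by (rule sum.cong) (auto simp: v \<psi>_def)
      ultimately show "w \<in> mons ?S' (d - ?u i)" using vm v by (auto simp: mons_def \<psi>_def D_def)
    qed
    have inj\<psi>: "inj_on \<psi> D"
    proof (rule inj_onI)
      fix v v' assume "v \<in> D" "v' \<in> D" "\<psi> v = \<psi> v'"
      then show "v = v'" unfolding \<psi>_def D_def by (metis (mono_tags, lifting) fun_upd_triv fun_upd_upd mem_Collect_eq)
    qed
    have MSpsi: "MS ?S' (\<psi> ` D) \<subseteq> \<psi> ` MS ?S' D"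
    proof
      fix w assume "w \<in> MS ?S' (\<psi> ` D)"
      then obtain l v where lv: "l \<in> ?S'" "v \<in> D" "w = xmul l (\<psi> v)" unfolding MS_def by auto
      then have "w = \<psi> (xmul l v)" by (auto simp: \<psi>_def xmul_def fun_eq_iff)
      then show "w \<in> \<psi> ` MS ?S' D" using lv unfolding MS_def by blast
    qed
    have finMSD: "finite (MS ?S' D)" using MS_finite[OF finS' finD(1)] .
    have macD: "U k0 (card D) \<le> card (MS ?S' D)"
    proof -
      have "U (card ?S' - 1) (card (\<psi> ` D)) \<le> card (MS ?S' (\<psi> ` D))"
        by (rule macaulay[OF finS' S'ne psiD])
      also have "\<dots> \<le> card (\<psi> ` MS ?S' D)" by (rule card_mono[OF _ MSpsi]) (use finMSD in simp)
      also have "\<dots> \<le> card (MS ?S' D)" by (rule card_image_le[OF finMSD])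
      moreover have "card ?S' - 1 = k0" using cS' k0 by simp
      ultimately show ?thesis using card_image[OF inj\<psi>] by simp
    qed
    have got: "card (MS ?S V) = U (n - 1) ?h"
      using assms(3) mac_up_U[of "n - 1" ?h] k0 by (simp add: gotzmann_def MV_eq)
    have finMSV: "finite (MS ?S V)" using MS_finite[OF finS finV] .
    have Di: "w i = ?u i" if "w \<in> MS ?S' D" for w
      using that unfolding MS_def D_def by (auto simp: xmul_apply)
    have up: "card D \<le> mac_low (n - 1) ?h"
    proof -
      have sub: "xmul i ` V \<union> MS ?S' D \<subseteq> MS ?S V"
        using iS VDW(1) unfolding MS_def by blast
      have disj: "xmul i ` V \<inter> MS ?S' D = {}"
      proof -
        have "xmul i v i > ?u i" if "v \<in> V" for v using uv[OF that, of i] by (simp add: xmul_apply)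
        then show ?thesis using Di by fastforce
      qed
      have "card (xmul i ` V \<union> MS ?S' D) = ?h + card (MS ?S' D)"
        using card_Un_disjoint[OF _ finMSD disj] finV card_image[OF inj_on_subset[OF inj_xmul]] by simp
      then have "?h + card (MS ?S' D) \<le> U (n - 1) ?h" using card_mono[OF finMSV sub] got by simp
      then have "U k0 (card D) \<le> U (Suc k0) ?h - ?h" using macD k0 by simp
      then have "card D \<le> L (Suc k0) ?h" by (rule F4)
      then show ?thesis using mac_low_L[of "n - 1" ?h] k0 by simp
    qed
    have low: "hbar (n - 1) ?h \<le> card D"
    proof -
      have sub: "MS ?S W \<union> MS ?S' D \<subseteq> MS ?S V"
        using VDW(1) unfolding MS_def by blast
      have Wi: "w i > ?u i" if "w \<in> MS ?S W" for w
        using that unfolding MS_def W_def by (auto simp: xmul_apply)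
      have disj: "MS ?S W \<inter> MS ?S' D = {}" using Wi Di by fastforce
      have finMSW: "finite (MS ?S W)" using MS_finite[OF finS finD(2)] .
      have "card (MS ?S W) + card (MS ?S' D) \<le> U (n - 1) ?h"
        using card_Un_disjoint[OF finMSW finMSD disj] card_mono[OF finMSV sub] got by simp
      moreover have "U (card ?S - 1) (card W) \<le> card (MS ?S W)"
        by (rule macaulay[OF finS]) (use V VDW iS in auto)
      ultimately have key: "U (Suc k0) (?h - card D) + U k0 (card D) \<le> U (Suc k0) ?h"
        using macD k0 cW by simp
      let ?a = "bar_alpha (Suc k0) ?h"
      have hp: "((?a + Suc k0) choose (Suc k0)) < ?h" "?h \<le> ((Suc ?a + Suc k0) choose (Suc k0))"
        "hbar (Suc k0) ?h = ?h - ((?a + Suc k0) choose (Suc k0))"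
        using hbar_props[of "Suc k0" ?h] h2 by auto
      define r where "r = ?h - ((?a + Suc k0) choose (Suc k0))"
      have hr: "?h = ((?a + Suc k0) choose (Suc k0)) + r" "r \<ge> 1" using hp(1) by (auto simp: r_def)
      have rle: "r \<le> ((?a + Suc k0) choose k0)" using hp(2) hr(1) pascal[of ?a k0] by simp
      show ?thesis
      proof (rule ccontr)
        assume "\<not> ?thesis"
        then have cr: "card D < r" using hp(3) k0 r_def by simp
        have hc: "?h - card D = ((?a + Suc k0) choose (Suc k0)) + (r - card D)" using hr cr by simp
        have U1: "U (Suc k0) ?h = ((Suc ?a + Suc k0) choose (Suc k0)) + U k0 r"
          using U_D[OF rle] hr(1) by simp
        have U2: "U (Suc k0) (?h - card D) = ((Suc ?a + Suc k0) choose (Suc k0)) + U k0 (r - card D)"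
          using U_D[of "r - card D" ?a k0] rle hc by simp
        have bad: "U k0 (r - card D) + U k0 (card D) \<le> U k0 r" using key U1 U2 by simp
        show False
        proof (cases k0)
          case 0
          then have "r \<le> 1" using rle by simp
          then show False using cr c1 by simp
        next
          case (Suc k1)
          have "U (Suc k1) (r - card D + card D) < U (Suc k1) (r - card D) + U (Suc k1) (card D)"
            by (rule SS) (use cr c1 in auto)
          then show False using bad Suc cr by simp
        qed
      qed
    qed
    show ?thesis using up low DD by simp
  qed
qed

end
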